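(* Under the setting of the context, consider the relaxed MPC problem $\hat J_N^*(x;\delta)=\min_{\mathbf u}\sum_{k=0}^{N-1}\hat\ell(x_k,u_k)+\hat F(x_N)$ subject to $x_0=x$, $x_{k+1}=Ax_k+Bu_k$, with $\hat F(x)=x^\top Px+\varepsilon\hat B_f(x)$. For any compact set $\mathcal{X}_0\subseteq\mathcal{X}_N^\circ$ there exists $\bar\delta_0>0$ such that for any admissible relaxation parameter $\delta\le\bar\delta_0$ and any $x(0)\in\mathcal{X}_0$ the feedback $u(k)=\hat u_0^*(x(k))$ asymptotically stabilizes the origin of $x(k+1)=Ax(k)+Bu(k)$ under strict satisfaction of all input and state constraints.
   Context: System $x(k+1)=Ax(k)+Bu(k)$, $(A,B)$ stabilizable. Polytopes $\mathcal{X}=\{x:C_xx\le d_x\}$, $\mathcal{U}=\{u:C_uu\le d_u\}$ (compact), $d_x,d_u$ entrywise strictly positive; $C^i$ row $i$, $d^i$ entry $i$. Stage cost $\ell(x,u)=x^\top Qx+u^\top Ru$, $Q\succeq0$, $R\succ0$; horizon $N\ge1$; $\varepsilon>0$. Relaxed barrier with parameter $\delta\in(0,1]$: relaxing function $\beta(\cdot;\delta)$ is $\beta_k(z;\delta)=\frac{k-1}{k}[(\frac{z-k\delta}{(k-1)\delta})^k-1]-\ln\delta$ ($k\ge2$ even) or $\beta_e(z;\delta)=\exp(1-z/\delta)-1-\ln\delta$; $\hat B(z)=-\ln z$ if $z>\delta$, $\beta(z;\delta)$ if $z\le\delta$. With $z_x^i(x)=-C_x^ix+d_x^i$, $\hat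 B_x=\sum_i\hat B_{x,i}$, where either $\hat B_{x,i}(x)=\hat B(z_x^i(x))+\ln d_x^i-C_x^ix/d_x^i$ (gradient recentering) or $\hat B_{x,i}(x)=(1+w_x^i)(\hat B(z_x^i(x))+\ln d_x^i)$ with $w_x\ge0$, $\sum_i(1+w_x^i)(C_x^i)^\top/d_x^i=0$ (weight recentering); $\hat B_u$ analogously. "Admissible" $\delta$ means $\hat B_x(0)=\hat B_u(0)=0$ and $\nabla\hat B_x(0)=\nabla\hat B_u(0)=0$. Nonrelaxed $B_x,B_u$: same formulas with $\hat B(z)$ replaced by $-\ln z$ (on the interiors). $\hat\ell(x,u)=\ell(x,u)+\varepsilon\hat B_u(u)+\varepsilon\hat B_x(x)$. Ingredients: $K$ with $A_K=A+BK$ Schur; $\mathcal{X}_K=\{x\in\mathcal{X}:Kx\in\mathcal{U}\}$, $B_K(x)=B_x(x)+B_u(Kx)$; $M\succeq0$ and convex compact $\mathcal{N}\subset\mathcal{X}_K$ with $0\in\mathcal{N}^\circ$ such that $B_K(x)\le x^\top Mx$ on $\mathcal{N}$; $P\succ0$ with $P=A_K^\top PA_K+K^\top RK+Q+\varepsilon M$; terminal set $\mathcal{X}_f=\{x:\varphi(x)\le1\}$ convex compact, $0\in\mathcal{X}_f\subset\mathcal{N}$, $A_K\mathcal{X}_f\subseteq\mathcal{X}_f$, where $\varphi$ is continuously differentiable, convex, positive definite with $\varphi(A_Kx)\le\varphi(x)$ on $\mathcal{X}_f$; a recentered barrier $B_f:\mathcal{X}_f^\circ\to\mathbb{R}_{\ge0}$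 (convex, $B_f(0)=0$, $\to\infty$ at boundary) with $B_f(A_Kx)\le B_f(x)$ on $\mathcal{X}_f^\circ$. The relaxed terminal barrier is $\hat B_f(x)=\hat B(1-\varphi(x))$. Feasible set: $\mathcal{X}_N=\{x\in\mathcal{X}:\exists\,\mathbf u$ with $u_k\in\mathcal{U}$, $x_k\in\mathcal{X}$, $k=0,\dots,N-1$, $x_N\in\mathcal{X}_f\}$ (predicted states from $x_0=x$). *)

theory Defs
  imports "HOL-Analysis.Analysis"
begin

section \<open>Linear-algebra notions\<close>

text \<open>Schur stability: every (complex) eigenvalue lies in the open unit disc.\<close>
definition schur :: "real^'n^'n \<Rightarrow> bool" where
  "schur A \<longleftrightarrow>
     (\<forall>(l::complex) (v::complex^'n). v \<noteq> 0 \<and>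
        (\<chi> i j. complex_of_real (A $ i $ j)) *v v = l *s v \<longrightarrow> cmod l < 1)"

definition stabilizable :: "real^'n^'n \<Rightarrow> real^'m^'n \<Rightarrow> bool" where
  "stabilizable A B \<longleftrightarrow> (\<exists>K::real^'n^'m. schur (A + B ** K))"

definition psd :: "real^'n^'n \<Rightarrow> bool" where
  "psd Q \<longleftrightarrow> transpose Q = Q \<and> (\<forall>x. 0 \<le> x \<bullet> (Q *v x))"

definition pd :: "real^'n^'n \<Rightarrow> bool" where
  "pd Q \<longleftrightarrow> transpose Q = Q \<and> (\<forall>x. x \<noteq> 0 \<longrightarrow> 0 < x \<bullet> (Q *v x))"

definition qf :: "real^'n^'n \<Rightarrow> real^'n \<Rightarrow> real" where
  "qf Q x = x \<bullet> (Q *v x)"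

text \<open>Polytope \<open>{x. C x \<le> d}\<close>; row i of C is \<open>C $ i\<close>.\<close>
definition polytope_set :: "real^'n^'p \<Rightarrow> real^'p \<Rightarrow> (real^'n) set" where
  "polytope_set C d = {x. \<forall>i. (C $ i) \<bullet> x \<le> d $ i}"

definition strictly_in :: "real^'n^'p \<Rightarrow> real^'p \<Rightarrow> real^'n \<Rightarrow> bool" where
  "strictly_in C d x \<longleftrightarrow> (\<forall>i. (C $ i) \<bullet> x < d $ i)"

section \<open>Relaxed barrier functions\<close>

text \<open>Choice of relaxing function: polynomial of even order k, or exponential.\<close>
datatype relax_kind = PolyRelax nat | ExpRelax

definition valid_relax :: "relax_kind \<Rightarrow> bool" where
  "valid_relax r \<longleftrightarrow> (case r of PolyRelax k \<Rightarrow> 2 \<le> k \<and> even k | ExpRelax \<Rightarrow> True)"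

definition beta :: "relax_kind \<Rightarrow> real \<Rightarrow> real \<Rightarrow> real" where
  "beta r \<delta> z = (case r of
      PolyRelax k \<Rightarrow> (real k - 1) / real k *
          (((z - real k * \<delta>) / ((real k - 1) * \<delta>)) ^ k - 1) - ln \<delta>
    | ExpRelax \<Rightarrow> exp (1 - z / \<delta>) - 1 - ln \<delta>)"

definition Bhat :: "relax_kind \<Rightarrow> real \<Rightarrow> real \<Rightarrow> real" where
  "Bhat r \<delta> z = (if z > \<delta> then - ln z else beta r \<delta> z)"

text \<open>Recentering: gradient recentering, or weight recentering with weight vector w.\<close>
datatype 'p recenter = GradRecenter | WeightRecenter "real^'p"

definition valid_recenter :: "real^'n^'p \<Rightarrow> real^'p \<Rightarrow> 'p recenter \<Rightarrow> bool" where
  "valid_recenter C d rc \<longleftrightarrow> (case rc of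
      GradRecenter \<Rightarrow> True
    | WeightRecenter w \<Rightarrow> (\<forall>i. 0 \<le> w $ i) \<and>
         (\<Sum>i\<in>UNIV. ((1 + w $ i) / d $ i) *\<^sub>R (C $ i)) = 0)"

text \<open>Generic recentered barrier built from a scalar barrier \<open>b\<close> (either the
  relaxed \<open>Bhat r \<delta>\<close> or the logarithmic \<open>\<lambda>z. - ln z\<close>).\<close>
definition rbarrier :: "(real \<Rightarrow> real) \<Rightarrow> real^'n^'p \<Rightarrow> real^'p \<Rightarrow> 'p recenter \<Rightarrow> real^'n \<Rightarrow> real" where
  "rbarrier b C d rc x = (\<Sum>i\<in>UNIV.
      (case rc of
         GradRecenter \<Rightarrow> b (d $ i - (C $ i) \<bullet> x) + ln (d $ i) - ((C $ i) \<bullet> x) / d $ i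
       | WeightRecenter w \<Rightarrow> (1 + w $ i) * (b (d $ i - (C $ i) \<bullet> x) + ln (d $ i))))"

text \<open>Relaxed recentered barrier \<open>\<hat>B\<close>.\<close>
definition relaxed_barrier :: "relax_kind \<Rightarrow> real \<Rightarrow> real^'n^'p \<Rightarrow> real^'p \<Rightarrow> 'p recenter \<Rightarrow> real^'n \<Rightarrow> real" where
  "relaxed_barrier r \<delta> C d rc = rbarrier (Bhat r \<delta>) C d rc"

text \<open>Nonrelaxed recentered barrier (meaningful on the interior of the polytope).\<close>
definition log_barrier :: "real^'n^'p \<Rightarrow> real^'p \<Rightarrow> 'p recenter \<Rightarrow> real^'n \<Rightarrow> real" where
  "log_barrier C d rc = rbarrier (\<lambda>z. - ln z) C d rc"

text \<open>Admissible relaxation parameter.\<close>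
definition admissible ::
  "relax_kind \<Rightarrow> real^'n^'p \<Rightarrow> real^'p \<Rightarrow> 'p recenter \<Rightarrow>
   real^'m^'q \<Rightarrow> real^'q \<Rightarrow> 'q recenter \<Rightarrow> real \<Rightarrow> bool" where
  "admissible r Cx dx rcx Cu du rcu \<delta> \<longleftrightarrow>
     0 < \<delta> \<and> \<delta> \<le> 1 \<and>
     relaxed_barrier r \<delta> Cx dx rcx 0 = 0 \<and> relaxed_barrier r \<delta> Cu du rcu 0 = 0 \<and>
     (relaxed_barrier r \<delta> Cx dx rcx has_derivative (\<lambda>h. 0)) (at 0) \<and>
     (relaxed_barrier r \<delta> Cu du rcu has_derivative (\<lambda>h. 0)) (at 0)"

section \<open>Predictions, feasible set, MPC cost\<close>

fun pred :: "real^'n^'n \<Rightarrow> real^'m^'n \<Rightarrow> real^'n \<Rightarrow> (nat \<Rightarrow> real^'m) \<Rightarrow> nat \<Rightarrow> real^'n" where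
  "pred A B x u 0 = x"
| "pred A B x u (Suc k) = A *v pred A B x u k + B *v u k"

definition feasible_set ::
  "real^'n^'n \<Rightarrow> real^'m^'n \<Rightarrow> (real^'n) set \<Rightarrow> (real^'m) set \<Rightarrow> (real^'n) set \<Rightarrow> nat \<Rightarrow> (real^'n) set" where
  "feasible_set A B X U Xf N = {x \<in> X. \<exists>u. (\<forall>k<N. u k \<in> U \<and> pred A B x u k \<in> X) \<and> pred A B x u N \<in> Xf}"

text \<open>Relaxed MPC cost \<open>\<hat>J_N(x,u;\<delta>)\<close> with stage cost
  \<open>\<ell> + \<epsilon> \<hat>B_u + \<epsilon> \<hat>B_x\<close> and terminal cost \<open>x'Px + \<epsilon> \<hat>B(1 - \<phi> x)\<close>.\<close>
definition relaxed_cost ::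
  "real^'n^'n \<Rightarrow> real^'m^'n \<Rightarrow> real^'n^'n \<Rightarrow> real^'m^'m \<Rightarrow> real \<Rightarrow> nat \<Rightarrow>
   relax_kind \<Rightarrow> real \<Rightarrow>
   real^'n^'p \<Rightarrow> real^'p \<Rightarrow> 'p recenter \<Rightarrow> real^'m^'q \<Rightarrow> real^'q \<Rightarrow> 'q recenter \<Rightarrow>
   real^'n^'n \<Rightarrow> (real^'n \<Rightarrow> real) \<Rightarrow> real^'n \<Rightarrow> (nat \<Rightarrow> real^'m) \<Rightarrow> real" where
  "relaxed_cost A B Q R \<epsilon> N r \<delta> Cx dx rcx Cu du rcu P \<phi> x u =
     (\<Sum>k<N. qf Q (pred A B x u k) + qf R (u k)
              + \<epsilon> * relaxed_barrier r \<delta> Cu du rcu (u k)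
              + \<epsilon> * relaxed_barrier r \<delta> Cx dx rcx (pred A B x u k))
     + qf P (pred A B x u N) + \<epsilon> * Bhat r \<delta> (1 - \<phi> (pred A B x u N))"

text \<open>Closed loop under the relaxed MPC feedback: at each time the applied input
  is the first element of an optimal input sequence for the current state.\<close>
definition closed_loop ::
  "real^'n^'n \<Rightarrow> real^'m^'n \<Rightarrow> (real^'n \<Rightarrow> (nat \<Rightarrow> real^'m) \<Rightarrow> real) \<Rightarrow>
   (nat \<Rightarrow> real^'n) \<Rightarrow> (nat \<Rightarrow> nat \<Rightarrow> real^'m) \<Rightarrow> bool" where
  "closed_loop A B J xs us \<longleftrightarrow>
     (\<forall>k. (\<forall>v. J (xs k) (us k) \<le> J (xs k) v) \<and>
          xs (Suc k) = A *v xs k + B *v us k 0)"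

end

theory Submission
  imports Defs "Jordan_Normal_Form.Spectral_Radius"
begin


definition cmat :: "(nat \<Rightarrow> 'n::finite) \<Rightarrow> real^'n^'n \<Rightarrow> complex mat" where
  "cmat e M = mat CARD('n) CARD('n) (\<lambda>(i,j). complex_of_real (vec_nth (vec_nth M (e i)) (e j)))"

lemma cmat_carrier: "cmat e M \<in> carrier_mat CARD('n) CARD('n)" for M :: "real^'n::finite^'n"
  by (simp add: cmat_def)

lemma sum_reindex_e:
  assumes e: "bij_betw e {..<CARD('n)} (UNIV::'n::finite set)"
  shows "(\<Sum>j\<in>UNIV. f j) = (\<Sum>l<CARD('n). f (e l))"
  using sum.reindex_bij_betw[OF e, of f] by simp

lemma eig_transfer:
  fixes M :: "real^'n::finite^'n"
  assumes e: "bij_betw e {..<CARD('n)} (UNIV::'n set)"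
    and ev: "eigenvector (cmat e M) v l"
  shows "\<exists>w::complex^'n. w \<noteq> 0 \<and> (\<chi> i j. complex_of_real (vec_nth (vec_nth M i) j)) *v w = l *s w"
proof -
  let ?n = "CARD('n)"
  define ei where "ei = inv_into {..<?n} e"
  have ei: "\<And>i. ei i < ?n" "\<And>i. e (ei i) = i" using e unfolding ei_def
    by (metis UNIV_I bij_betw_def inv_into_into lessThan_iff, metis UNIV_I bij_betw_def f_inv_into_f)
  have eie: "\<And>l. l < ?n \<Longrightarrow> ei (e l) = l" using e unfolding ei_def
    by (auto simp: bij_betw_def inv_into_f_f)
  from ev have vc: "v \<in> carrier_vec ?n" and vnz: "v \<noteq> 0\<^sub>v ?n"
    and eq: "cmat e M *\<^sub>v v = l \<cdot>\<^sub>v v"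
    by (auto simp: eigenvector_def cmat_def)
  define w :: "complex^'n" where "w = (\<chi> i. vec_index v (ei i))"
  have "w \<noteq> 0"
  proof
    assume "w = 0"
    hence "\<And>i. vec_index v (ei i) = 0" unfolding w_def by (metis vec_lambda_beta zero_index)
    hence "\<And>j. j < ?n \<Longrightarrow> vec_index v j = 0" by (metis eie)
    with vc vnz show False by auto
  qed
  moreover have "(\<chi> i j. complex_of_real (vec_nth (vec_nth M i) j)) *v w = l *s w"
  proof (rule iffD2[OF Finite_Cartesian_Product.vec_eq_iff], rule allI)
    fix i
    have "((\<chi> i j. complex_of_real (vec_nth (vec_nth M i) j)) *v w) $ i
        = (\<Sum>j\<in>UNIV. complex_of_real (M $ i $ j) * w $ j)"
      by (simp add: matrix_vector_mult_def)
    also have "\<dots> = (\<Sum>j<?n. complex_of_real (M $ i $ e j) * vec_index v (ei (e j)))"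
      unfolding w_def by (simp add: sum_reindex_e[OF e])
    also have "\<dots> = (\<Sum>j<?n. complex_of_real (M $ e (ei i) $ e j) * vec_index v j)"
      by (rule sum.cong) (auto simp: eie ei)
    also have "\<dots> = vec_index (cmat e M *\<^sub>v v) (ei i)"
      using ei vc by (simp add: cmat_def scalar_prod_def row_def lessThan_atLeast0)
    also have "\<dots> = l * vec_index v (ei i)" using eq ei vc by simp
    also have "\<dots> = (l *s w) $ i" by (simp add: w_def)
    finally show "((\<chi> i j. complex_of_real (vec_nth (vec_nth M i) j)) *v w) $ i = (l *s w) $ i" .
  qed
  ultimately show ?thesis by blast
qed

lemma pow_repr:
  fixes M :: "real^'n::finite^'n"
  assumes e: "bij_betw e {..<CARD('n)} (UNIV::'n set)"
  shows "i < CARD('n) \<Longrightarrow> complex_of_real (vec_nth ((((*v) M) ^^ k) x) (e i))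
     = (\<Sum>j<CARD('n). ((cmat e M) ^\<^sub>m k) $$ (i,j) * complex_of_real (vec_nth x (e j)))"
proof (induction k arbitrary: x)
  case 0
  have "(\<Sum>j<CARD('n). ((cmat e M) ^\<^sub>m 0) $$ (i,j) * complex_of_real (vec_nth x (e j)))
      = (\<Sum>j<CARD('n). (if i = j then complex_of_real (vec_nth x (e j)) else 0))"
    by (rule sum.cong) (use 0 in \<open>auto simp: cmat_def\<close>)
  also have "\<dots> = complex_of_real (vec_nth x (e i))" using 0 by simp
  finally show ?case by simp
next
  case (Suc k)
  let ?n = "CARD('n)"
  let ?C = "cmat e M"
  have C: "?C \<in> carrier_mat ?n ?n" by (rule cmat_carrier)
  have inner: "complex_of_real (vec_nth (M *v x) (e l)) = (\<Sum>j<?n. ?C $$ (l,j) * complex_of_real (vec_nth x (e j)))"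
    if l: "l < ?n" for l
  proof -
    have "vec_nth (M *v x) (e l) = (\<Sum>j\<in>UNIV. vec_nth (vec_nth M (e l)) j * vec_nth x j)"
      by (simp add: matrix_vector_mult_def)
    also have "\<dots> = (\<Sum>j<?n. vec_nth (vec_nth M (e l)) (e j) * vec_nth x (e j))"
      by (rule sum_reindex_e[OF e])
    finally show ?thesis using l by (simp add: cmat_def)
  qed
  have "complex_of_real (vec_nth ((((*v) M) ^^ Suc k) x) (e i))
      = complex_of_real (vec_nth ((((*v) M) ^^ k) (M *v x)) (e i))"
    by (simp only: funpow_Suc_right comp_def)
  also have "\<dots> = (\<Sum>l<?n. (?C ^\<^sub>m k) $$ (i,l) * complex_of_real (vec_nth (M *v x) (e l)))"
    using Suc by simp
  also have "\<dots> = (\<Sum>l<?n. (?C ^\<^sub>m k) $$ (i,l) * (\<Sum>j<?n. ?C $$ (l,j) * complex_of_real (vec_nth x (e j))))"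
    by (rule sum.cong) (auto simp: inner)
  also have "\<dots> = (\<Sum>j<?n. (\<Sum>l<?n. (?C ^\<^sub>m k) $$ (i,l) * ?C $$ (l,j)) * complex_of_real (vec_nth x (e j)))"
    unfolding sum_distrib_left sum_distrib_right mult.assoc by (rule sum.swap)
  also have "\<dots> = (\<Sum>j<?n. ((?C ^\<^sub>m Suc k) $$ (i,j)) * complex_of_real (vec_nth x (e j)))"
  proof (rule sum.cong)
    fix j assume j: "j \<in> {..<?n}"
    have pk: "?C ^\<^sub>m k \<in> carrier_mat ?n ?n" using C by simp
    have "(?C ^\<^sub>m Suc k) $$ (i,j) = (\<Sum>l<?n. (?C ^\<^sub>m k) $$ (i,l) * ?C $$ (l,j))"
      using Suc.prems j pk C by (simp add: scalar_prod_def lessThan_atLeast0)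
    thus "(\<Sum>l<?n. (?C ^\<^sub>m k) $$ (i,l) * ?C $$ (l,j)) * complex_of_real (vec_nth x (e j))
        = ((?C ^\<^sub>m Suc k) $$ (i,j)) * complex_of_real (vec_nth x (e j))" by simp
  qed simp
  finally show ?case .
qed

lemma bounded_from_norm_bound:
  fixes M :: "real^'n::finite^'n"
  assumes e: "bij_betw e {..<CARD('n)} (UNIV::'n set)"
    and nb: "\<And>k. norm_bound ((cmat e M) ^\<^sub>m k) c"
  shows "norm ((((*v) M) ^^ k) x) \<le> real CARD('n) * real CARD('n) * c * norm x"
proof -
  let ?n = "CARD('n)"
  let ?y = "(((*v) M) ^^ k) x"
  have C: "cmat e M \<in> carrier_mat ?n ?n" by (rule cmat_carrier)
  have comp: "\<bar>vec_nth ?y (e i)\<bar> \<le> real ?n * c * norm x" if i: "i < ?n" for i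
  proof -
    have "\<bar>vec_nth ?y (e i)\<bar> = cmod (complex_of_real (vec_nth ?y (e i)))" by simp
    also have "\<dots> = cmod (\<Sum>j<?n. ((cmat e M) ^\<^sub>m k) $$ (i,j) * complex_of_real (vec_nth x (e j)))"
      using pow_repr[OF e i] by simp
    also have "\<dots> \<le> (\<Sum>j<?n. cmod (((cmat e M) ^\<^sub>m k) $$ (i,j) * complex_of_real (vec_nth x (e j))))"
      by (rule norm_sum)
    also have "\<dots> \<le> (\<Sum>j<?n. c * norm x)"
    proof (rule sum_mono)
      fix j assume j: "j \<in> {..<?n}"
      have "cmod (((cmat e M) ^\<^sub>m k) $$ (i,j)) \<le> c"
        using nb[of k] i j C unfolding norm_bound_def by auto
      moreover have "cmod (complex_of_real (vec_nth x (e j))) \<le> norm x"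
        using component_le_norm_cart[of x "e j"] by simp
      ultimately show "cmod (((cmat e M) ^\<^sub>m k) $$ (i,j) * complex_of_real (vec_nth x (e j))) \<le> c * norm x"
        by (simp add: norm_mult mult_mono' )
    qed
    finally show ?thesis by simp
  qed
  have "norm ?y \<le> (\<Sum>i\<in>UNIV. \<bar>vec_nth ?y i\<bar>)" by (rule norm_le_l1_cart)
  also have "\<dots> = (\<Sum>i<?n. \<bar>vec_nth ?y (e i)\<bar>)" by (rule sum_reindex_e[OF e])
  also have "\<dots> \<le> (\<Sum>i<?n. real ?n * c * norm x)" by (rule sum_mono) (use comp in auto)
  finally show ?thesis by simp
qed

lemma schur_decay:
  fixes M :: "real^'n::finite^'n"
  assumes sch: "schur M"
  shows "\<exists>c \<rho>. 0 < \<rho> \<and> \<rho> < 1 \<and> (\<forall>k x. norm ((((*v) M) ^^ k) x) \<le> c * \<rho>^k * norm x)"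
proof -
  let ?n = "CARD('n)"
  obtain e where e0: "bij_betw e {0..<?n} (UNIV::'n set)"
    using ex_bij_betw_nat_finite[of "UNIV::'n set"] by auto
  have e: "bij_betw e {..<?n} (UNIV::'n set)" using e0 by (simp add: lessThan_atLeast0)
  let ?C = "cmat e M"
  have C: "?C \<in> carrier_mat ?n ?n" by (rule cmat_carrier)
  have n0: "?n > 0" by simp
  define s where "s = spectral_radius ?C"
  obtain l where l: "l \<in> spectrum ?C" "s = norm l"
    using spectral_radius_mem_max(1)[OF C n0] unfolding s_def by auto
  from l(1) obtain v where "eigenvector ?C v l" unfolding spectrum_def eigenvalue_def by auto
  from eig_transfer[OF e this] obtain w where "w \<noteq> 0"
    "(\<chi> i j. complex_of_real (vec_nth (vec_nth M i) j)) *v w = l *s w" by auto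
  with sch have "cmod l < 1" unfolding schur_def by blast
  hence s1: "s < 1" using l by simp
  have s0: "0 \<le> s" using l by simp
  define \<rho> where "\<rho> = (1 + s) / 2"
  have rho: "0 < \<rho>" "\<rho> < 1" "s < \<rho>" using s0 s1 by (auto simp: \<rho>_def)
  define M' where "M' = (1/\<rho>) *\<^sub>R M"
  let ?C' = "cmat e M'"
  have C': "?C' \<in> carrier_mat ?n ?n" by (rule cmat_carrier)
  have entries: "?C $$ (i,j) = complex_of_real \<rho> * ?C' $$ (i,j)" if "i < ?n" "j < ?n" for i j
    using that rho by (simp add: cmat_def M'_def)
  have sr': "spectral_radius ?C' < 1"
  proof -
    obtain l' where l': "l' \<in> spectrum ?C'" "spectral_radius ?C' = norm l'"
      using spectral_radius_mem_max(1)[OF C' n0] by auto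
    from l'(1) obtain v' where ev': "eigenvector ?C' v' l'" unfolding spectrum_def eigenvalue_def by auto
    hence vc: "v' \<in> carrier_vec ?n" "v' \<noteq> 0\<^sub>v ?n" and eq: "?C' *\<^sub>v v' = l' \<cdot>\<^sub>v v'"
      by (auto simp: eigenvector_def cmat_def)
    have "?C *\<^sub>v v' = (complex_of_real \<rho> * l') \<cdot>\<^sub>v v'"
    proof (rule eq_vecI)
      fix i assume i: "i < dim_vec ((complex_of_real \<rho> * l') \<cdot>\<^sub>v v')"
      hence i': "i < ?n" using vc by simp
      have "vec_index (?C *\<^sub>v v') i = (\<Sum>j<?n. ?C $$ (i,j) * vec_index v' j)"
        using i' C vc by (simp add: scalar_prod_def lessThan_atLeast0)
      also have "\<dots> = complex_of_real \<rho> * (\<Sum>j<?n. ?C' $$ (i,j) * vec_index v' j)"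
        by (simp add: sum_distrib_left entries i' mult.assoc)
      also have "(\<Sum>j<?n. ?C' $$ (i,j) * vec_index v' j) = vec_index (?C' *\<^sub>v v') i"
        using i' C' vc by (simp add: scalar_prod_def lessThan_atLeast0)
      also have "\<dots> = l' * vec_index v' i" using eq i' vc by simp
      finally show "vec_index (?C *\<^sub>v v') i = vec_index ((complex_of_real \<rho> * l') \<cdot>\<^sub>v v') i"
        using i' vc by simp
    qed (use vc C in simp)
    hence "eigenvector ?C v' (complex_of_real \<rho> * l')"
      using vc C by (simp add: eigenvector_def)
    hence "complex_of_real \<rho> * l' \<in> spectrum ?C" unfolding spectrum_def eigenvalue_def by auto
    hence "norm (complex_of_real \<rho> * l') \<le> s"
      using spectral_radius_mem_max(2)[OF C n0] unfolding s_def by auto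
    hence "\<rho> * norm l' \<le> s" using rho by (simp add: norm_mult)
    hence "\<rho> * norm l' < \<rho> * 1" using rho by linarith
    hence "norm l' < 1" using rho by (simp only: mult_less_cancel_left_pos)
    thus ?thesis using l' by simp
  qed
  obtain c where nb: "\<And>k. norm_bound (?C' ^\<^sub>m k) c"
    using spectral_radius_jnf_norm_bound_less_1_upper_triangular[OF C' sr'] by auto
  have bd: "norm ((((*v) M') ^^ k) x) \<le> real ?n * real ?n * c * norm x" for k x
    by (rule bounded_from_norm_bound[OF e nb])
  have scale: "(((*v) M) ^^ k) x = \<rho>^k *\<^sub>R ((((*v) M') ^^ k) x)" for k x
  proof (induction k)
    case 0 show ?case by simp
  next
    case (Suc k)
    have "M = \<rho> *\<^sub>R M'" using rho by (simp add: M'_def)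
    hence "M *v y = \<rho> *\<^sub>R (M' *v y)" for y by (simp add: scaleR_matrix_vector_assoc)
    thus ?case using Suc by (simp add: matrix_vector_mult_scaleR)
  qed
  have "\<forall>k x. norm ((((*v) M) ^^ k) x) \<le> (real ?n * real ?n * c) * \<rho>^k * norm x"
  proof (intro allI)
    fix k x
    have "norm ((((*v) M) ^^ k) x) = \<rho>^k * norm ((((*v) M') ^^ k) x)"
      using rho by (simp add: scale)
    also have "\<dots> \<le> \<rho>^k * (real ?n * real ?n * c * norm x)"
      using bd rho by (intro mult_left_mono) auto
    finally show "norm ((((*v) M) ^^ k) x) \<le> (real ?n * real ?n * c) * \<rho>^k * norm x"
      by (simp add: algebra_simps)
  qed
  thus ?thesis using rho by blast
qed


no_notation vec_index (infixl \<open>$\<close> 100)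
no_notation scalar_prod (infix \<open>\<bullet>\<close> 70)


section \<open>Real lemmas on the relaxed barrier\<close>

lemma subgrad_from_deriv:
  fixes f f' :: "real \<Rightarrow> real"
  assumes der: "\<And>x. (f has_real_derivative f' x) (at x)"
    and mono: "\<And>x y. x \<le> y \<Longrightarrow> f' x \<le> f' y"
  shows "f p + f' p * (z - p) \<le> f z"
proof (cases z p rule: linorder_cases)
  case less
  from MVT2[OF less, of f f'] der obtain w where w: "z < w" "w < p" "f p - f z = (p - z) * f' w"
    by blast
  have "f' w \<le> f' p" using mono w by simp
  hence "(p - z) * f' w \<le> (p - z) * f' p" using less by (intro mult_left_mono) auto
  thus ?thesis using w by (simp add: algebra_simps)
next
  case equal thus ?thesis by simp
next
  case greater
  from MVT2[OF greater, of f f'] der obtain w where w: "p < w" "w < z" "f z - f p = (z - p) * f' w"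
    by blast
  have "f' p \<le> f' w" using mono w by simp
  hence "(z - p) * f' p \<le> (z - p) * f' w" using greater by (intro mult_left_mono) auto
  thus ?thesis using w by (simp add: algebra_simps)
qed

definition dbeta :: "relax_kind \<Rightarrow> real \<Rightarrow> real \<Rightarrow> real" where
  "dbeta r \<delta> z = (case r of
      PolyRelax k \<Rightarrow> ((z - real k * \<delta>) / ((real k - 1) * \<delta>)) ^ (k - 1) / \<delta>
    | ExpRelax \<Rightarrow> - exp (1 - z / \<delta>) / \<delta>)"

lemma beta_deriv:
  assumes "valid_relax r" "0 < \<delta>"
  shows "(beta r \<delta> has_real_derivative dbeta r \<delta> z) (at z)"
proof (cases r)
  case (PolyRelax k)
  with assms have k: "2 \<le> k" "even k" by (auto simp: valid_relax_def)
  have k1: "real k - 1 \<noteq> 0" using k by simp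
  have "((\<lambda>z. (real k - 1) / real k * (((z - real k * \<delta>) / ((real k - 1) * \<delta>)) ^ k - 1) - ln \<delta>)
     has_real_derivative (real k - 1) / real k * (real k * ((z - real k * \<delta>) / ((real k - 1) * \<delta>)) ^ (k - 1) * (1 / ((real k - 1) * \<delta>)))) (at z)"
    using assms k1 by (auto intro!: derivative_eq_intros)
  moreover have "(real k - 1) / real k * (real k * ((z - real k * \<delta>) / ((real k - 1) * \<delta>)) ^ (k - 1) * (1 / ((real k - 1) * \<delta>)))
      = ((z - real k * \<delta>) / ((real k - 1) * \<delta>)) ^ (k - 1) / \<delta>"
    using k k1 assms by (simp add: field_simps)
  ultimately show ?thesis using PolyRelax by (simp add: beta_def[abs_def] dbeta_def)
next
  case ExpRelax
  have "((\<lambda>z. exp (1 - z / \<delta>) - 1 - ln \<delta>) has_real_derivative exp (1 - z / \<delta>) * (- (1 / \<delta>))) (at z)"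
    using assms by (auto intro!: derivative_eq_intros)
  thus ?thesis using ExpRelax by (simp add: beta_def[abs_def] dbeta_def)
qed

lemma dbeta_mono:
  assumes "valid_relax r" "0 < \<delta>" "x \<le> y"
  shows "dbeta r \<delta> x \<le> dbeta r \<delta> y"
proof (cases r)
  case (PolyRelax k)
  with assms have k: "2 \<le> k" "even k" by (auto simp: valid_relax_def)
  have "odd (k - 1)" using k by simp
  moreover have "(x - real k * \<delta>) / ((real k - 1) * \<delta>) \<le> (y - real k * \<delta>) / ((real k - 1) * \<delta>)"
    using assms k by (intro divide_right_mono) auto
  ultimately have "((x - real k * \<delta>) / ((real k - 1) * \<delta>)) ^ (k - 1) \<le> ((y - real k * \<delta>) / ((real k - 1) * \<delta>)) ^ (k - 1)"
    by (rule power_mono_odd)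
  thus ?thesis using PolyRelax assms by (simp add: dbeta_def divide_right_mono)
next
  case ExpRelax
  have "exp (1 - y / \<delta>) \<le> exp (1 - x / \<delta>)" using assms by (simp add: divide_right_mono)
  thus ?thesis using ExpRelax assms by (simp add: dbeta_def divide_right_mono)
qed

lemma dbeta_delta: assumes "valid_relax r" "0 < \<delta>" shows "dbeta r \<delta> \<delta> = - 1 / \<delta>"
proof (cases r)
  case (PolyRelax k)
  with assms have k: "2 \<le> k" "even k" by (auto simp: valid_relax_def)
  have k1: "real k - 1 \<noteq> 0" using k by simp
  have "(\<delta> - real k * \<delta>) / ((real k - 1) * \<delta>) = -1" using k1 assms by (simp add: field_simps)
  moreover have "odd (k - 1)" using k by simp
  ultimately show ?thesis using PolyRelax by (simp add: dbeta_def)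
next
  case ExpRelax thus ?thesis using assms by (simp add: dbeta_def)
qed

lemma beta_delta: assumes "valid_relax r" "0 < \<delta>" shows "beta r \<delta> \<delta> = - ln \<delta>"
proof (cases r)
  case (PolyRelax k)
  with assms have k: "2 \<le> k" "even k" by (auto simp: valid_relax_def)
  have k1: "real k - 1 \<noteq> 0" using k by simp
  have "(\<delta> - real k * \<delta>) / ((real k - 1) * \<delta>) = -1" using k1 assms by (simp add: field_simps)
  thus ?thesis using PolyRelax k by (simp add: beta_def)
next
  case ExpRelax thus ?thesis using assms by (simp add: beta_def)
qed

lemma beta_subgrad:
  assumes "valid_relax r" "0 < \<delta>"
  shows "beta r \<delta> p + dbeta r \<delta> p * (z - p) \<le> beta r \<delta> z"
  by (rule subgrad_from_deriv[OF beta_deriv[OF assms] dbeta_mono[OF assms]])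

definition dBhat :: "relax_kind \<Rightarrow> real \<Rightarrow> real \<Rightarrow> real" where
  "dBhat r \<delta> z = (if z > \<delta> then - 1 / z else dbeta r \<delta> z)"

lemma ln_tangent: fixes p z :: real assumes "0 < p" "0 < z" shows "- ln p - (z - p) / p \<le> - ln z"
proof -
  have "ln (z / p) \<le> z / p - 1" by (rule ln_le_minus_one) (use assms in simp)
  hence "ln z - ln p \<le> (z - p) / p" using assms by (simp add: ln_div diff_divide_distrib)
  thus ?thesis by simp
qed

lemma Bhat_subgrad:
  assumes r: "valid_relax r" and d: "0 < \<delta>"
  shows "Bhat r \<delta> p + dBhat r \<delta> p * (z - p) \<le> Bhat r \<delta> z"
proof -
  note bd = beta_subgrad[OF r d] dbeta_delta[OF r d] beta_delta[OF r d]
  have tang: "- ln \<delta> - (z - \<delta>) / \<delta> \<le> beta r \<delta> z" for z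
    using bd(1)[of \<delta> z] bd(2,3) by simp
  show ?thesis
  proof (cases "p > \<delta>")
    case True
    show ?thesis
    proof (cases "z > \<delta>")
      case True
      thus ?thesis using \<open>p > \<delta>\<close> d ln_tangent[of p z] by (simp add: Bhat_def dBhat_def)
    next
      case False
      have a: "- ln p - (\<delta> - p) / p \<le> - ln \<delta>" using ln_tangent[of p \<delta>] d True by simp
      have b: "(\<delta> - z) * (1 / p) \<le> (\<delta> - z) * (1 / \<delta>)"
        using False True d by (intro mult_left_mono) (auto simp: frac_le)
      have "- ln p - (z - p) / p = - ln p - (\<delta> - p) / p + (\<delta> - z) * (1/p)"
        using True d by (simp add: field_simps)
      also have "\<dots> \<le> - ln \<delta> + (\<delta> - z) * (1/\<delta>)" using a b by linarith
      also have "\<dots> = - ln \<delta> - (z - \<delta>) / \<delta>" using d by (simp add: field_simps)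
      also have "\<dots> \<le> beta r \<delta> z" by (rule tang)
      finally show ?thesis using True False by (simp add: Bhat_def dBhat_def)
    qed
  next
    case False
    show ?thesis
    proof (cases "z > \<delta>")
      case True
      have m: "dbeta r \<delta> p \<le> - 1 / \<delta>" using dbeta_mono[OF r d, of p \<delta>] False bd(2) by simp
      have "beta r \<delta> p + dbeta r \<delta> p * (z - p) = beta r \<delta> p + dbeta r \<delta> p * (\<delta> - p) + dbeta r \<delta> p * (z - \<delta>)"
        by (simp add: algebra_simps)
      also have "\<dots> \<le> beta r \<delta> \<delta> + (- 1 / \<delta>) * (z - \<delta>)"
        using bd(1)[of p \<delta>] mult_right_mono[OF m, of "z - \<delta>"] True by linarith
      also have "\<dots> = - ln \<delta> - (z - \<delta>) / \<delta>" using bd(3) by simp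
      also have "\<dots> \<le> - ln z" using ln_tangent[of \<delta> z] d True by simp
      finally show ?thesis using True False by (simp add: Bhat_def dBhat_def)
    next
      case False
      thus ?thesis using \<open>\<not> p > \<delta>\<close> bd(1)[of p z] by (simp add: Bhat_def dBhat_def)
    qed
  qed
qed

lemma dBhat_neg: assumes r: "valid_relax r" and d: "0 < \<delta>" shows "dBhat r \<delta> p < 0"
proof (cases "p > \<delta>")
  case True thus ?thesis using d by (simp add: dBhat_def)
next
  case False
  have "dbeta r \<delta> p \<le> - 1 / \<delta>" using dbeta_mono[OF r d, of p \<delta>] False dbeta_delta[OF r d] by simp
  thus ?thesis using False d by (simp add: dBhat_def) (smt (verit) divide_pos_pos)
qed

lemma Bhat_antimono:
  assumes r: "valid_relax r" and d: "0 < \<delta>" and "a \<le> b"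
  shows "Bhat r \<delta> b \<le> Bhat r \<delta> a"
proof -
  have "Bhat r \<delta> b + dBhat r \<delta> b * (a - b) \<le> Bhat r \<delta> a" by (rule Bhat_subgrad[OF r d])
  moreover have "0 \<le> dBhat r \<delta> b * (a - b)" using dBhat_neg[OF r d, of b] assms(3)
    by (simp add: mult_nonpos_nonpos)
  ultimately show ?thesis by linarith
qed

lemma Bhat_convex:
  assumes r: "valid_relax r" and d: "0 < \<delta>" and t: "0 \<le> t" "t \<le> 1"
  shows "Bhat r \<delta> ((1 - t) * x + t * y) \<le> (1 - t) * Bhat r \<delta> x + t * Bhat r \<delta> y"
proof -
  let ?m = "(1 - t) * x + t * y"
  let ?g = "dBhat r \<delta> ?m"
  have 1: "Bhat r \<delta> ?m + ?g * (x - ?m) \<le> Bhat r \<delta> x" by (rule Bhat_subgrad[OF r d])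
  have 2: "Bhat r \<delta> ?m + ?g * (y - ?m) \<le> Bhat r \<delta> y" by (rule Bhat_subgrad[OF r d])
  have "(1 - t) * (Bhat r \<delta> ?m + ?g * (x - ?m)) + t * (Bhat r \<delta> ?m + ?g * (y - ?m)) \<le> (1 - t) * Bhat r \<delta> x + t * Bhat r \<delta> y"
    using 1 2 t by (intro add_mono mult_left_mono) auto
  moreover have "(1 - t) * (Bhat r \<delta> ?m + ?g * (x - ?m)) + t * (Bhat r \<delta> ?m + ?g * (y - ?m)) = Bhat r \<delta> ?m"
    by (simp add: algebra_simps)
  ultimately show ?thesis by simp
qed

lemma Bhat_gt: "\<delta> < z \<Longrightarrow> Bhat r \<delta> z = - ln z" by (simp add: Bhat_def)

lemma Bhat_le_lb:
  assumes r: "valid_relax r" and d: "0 < \<delta>" and z: "z \<le> \<delta>"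
  shows "- ln \<delta> - (z - \<delta>) / \<delta> \<le> Bhat r \<delta> z"
  using beta_subgrad[OF r d, of \<delta> z] dbeta_delta[OF r d] beta_delta[OF r d] z
  by (simp add: Bhat_def)



section \<open>Quadratic forms\<close>

lemma mvec_bound: "\<exists>c\<ge>0. \<forall>x. norm (A *v x) \<le> c * norm x" for A :: "real^'n::finite^'m::finite"
  using bounded_linear.nonneg_bounded[OF matrix_vector_mul_bounded_linear[of A]]
  by (metis mult.commute)

lemma qf_sym: "transpose Q = Q \<Longrightarrow> x \<bullet> (Q *v y) = y \<bullet> (Q *v x)" for Q :: "real^'n::finite^'n"
  by (metis dot_lmul_matrix inner_commute transpose_matrix_vector)

lemma qf_add: "transpose Q = Q \<Longrightarrow> qf Q (x + y) = qf Q x + qf Q y + 2 * (x \<bullet> (Q *v y))"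
  for Q :: "real^'n::finite^'n"
proof -
  assume a: "transpose Q = Q"
  have s: "y \<bullet> (Q *v x) = x \<bullet> (Q *v y)" using qf_sym[OF a] .
  show ?thesis unfolding qf_def matrix_vector_right_distrib inner_add_left inner_add_right s by simp
qed

lemma qf_scale: "qf Q (c *\<^sub>R x) = c^2 * qf Q x" for Q :: "real^'n::finite^'n"
  unfolding qf_def by (simp add: matrix_vector_mult_scaleR power2_eq_square)

lemma qf_neg: "qf Q (- x) = qf Q x" for Q :: "real^'n::finite^'n"
  using qf_scale[of Q "-1" x] by simp

lemma qf_diff: "transpose Q = Q \<Longrightarrow> qf Q (x - y) = qf Q x + qf Q y - 2 * (x \<bullet> (Q *v y))"
  for Q :: "real^'n::finite^'n"
proof -
  assume a: "transpose Q = Q"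
  have s: "y \<bullet> (Q *v x) = x \<bullet> (Q *v y)" using qf_sym[OF a] .
  show ?thesis unfolding qf_def matrix_vector_mult_diff_distrib inner_diff_left inner_diff_right s by simp
qed

lemma qf_mid: "transpose Q = Q \<Longrightarrow>
   qf Q ((1/2) *\<^sub>R (a + b)) = (qf Q a + qf Q b) / 2 - qf Q (a - b) / 4"
  for Q :: "real^'n::finite^'n"
  using qf_scale[of Q "1/2" "a + b"] qf_add[of Q a b] qf_diff[of Q a b]
  by (simp add: power2_eq_square) (simp add: field_simps)

lemma qf_nonneg: "psd Q \<Longrightarrow> 0 \<le> qf Q x" by (simp add: psd_def qf_def)

lemma qf_transp: "qf (transpose A ** P ** A) x = qf P (A *v x)"
  for A :: "real^'n::finite^'m::finite" and P :: "real^'m^'m"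
proof -
  have "(transpose A ** P ** A) *v x = transpose A *v (P *v (A *v x))"
    by (simp add: matrix_vector_mul_assoc matrix_mul_assoc)
  moreover have "x \<bullet> (transpose A *v (P *v (A *v x))) = (A *v x) \<bullet> (P *v (A *v x))"
    by (metis dot_lmul_matrix inner_commute transpose_matrix_vector)
  ultimately show ?thesis unfolding qf_def by simp
qed

lemma qf_madd: "qf (X + Y) x = qf X x + qf Y x" unfolding qf_def
  by (simp add: matrix_vector_mult_add_rdistrib inner_add_right)

lemma qf_mscale: "qf (c *\<^sub>R X) x = c * qf X x" for X :: "real^'n::finite^'n"
  unfolding qf_def by (simp add: scaleR_matrix_vector_assoc[symmetric])

lemma qf_bound: "\<exists>c\<ge>0. \<forall>x. \<bar>qf Q x\<bar> \<le> c * norm x ^ 2" for Q :: "real^'n::finite^'n"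
proof -
  obtain c where c: "c \<ge> 0" "\<And>x. norm (Q *v x) \<le> c * norm x" using mvec_bound[of Q] by auto
  have "\<bar>qf Q x\<bar> \<le> c * norm x ^ 2" for x
  proof -
    have "\<bar>qf Q x\<bar> \<le> norm x * norm (Q *v x)" unfolding qf_def by (rule Cauchy_Schwarz_ineq2)
    also have "\<dots> \<le> norm x * (c * norm x)" by (intro mult_left_mono c) auto
    finally show ?thesis by (simp add: power2_eq_square algebra_simps)
  qed
  thus ?thesis using c by blast
qed

lemma qf_continuous: "continuous_on S (qf Q)" for Q :: "real^'n::finite^'n"
proof -
  have "continuous_on S ((*v) Q)" by (rule linear_continuous_on[OF matrix_vector_mul_bounded_linear])
  hence "continuous_on S (\<lambda>x. x \<bullet> (Q *v x))" by (intro continuous_on_inner continuous_on_id)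
  thus ?thesis unfolding qf_def[abs_def] .
qed

lemma qf_pd_lb: fixes P :: "real^'n::finite^'n" assumes "pd P" shows "\<exists>l>0. \<forall>x. l * norm x ^ 2 \<le> qf P x"
proof -
  have "axis undefined 1 \<in> sphere (0::real^'n) 1" by (simp add: norm_axis_1)
  hence ne: "sphere (0::real^'n) 1 \<noteq> {}" by blast
  obtain x0 where x0: "x0 \<in> sphere 0 1" "\<And>y. y \<in> sphere 0 1 \<Longrightarrow> qf P x0 \<le> qf P y"
    using continuous_attains_inf[OF compact_sphere ne qf_continuous] by blast
  have x0nz: "x0 \<noteq> 0" using x0(1) by (intro notI) simp
  have l: "0 < qf P x0" using assms x0nz unfolding pd_def qf_def by blast
  have "qf P x0 * norm x ^ 2 \<le> qf P x" for x
  proof (cases "x = 0")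
    case True thus ?thesis by (simp add: qf_def)
  next
    case False
    have nx: "0 < norm x" using False by simp
    have "norm ((1 / norm x) *\<^sub>R x) = 1" using nx by simp
    hence "(1 / norm x) *\<^sub>R x \<in> sphere 0 1" by simp
    hence "qf P x0 \<le> qf P ((1 / norm x) *\<^sub>R x)" by (rule x0(2))
    also have "\<dots> = (1 / norm x)^2 * qf P x" by (rule qf_scale)
    finally have "qf P x0 \<le> qf P x / (norm x)^2" by (simp add: power_divide)
    thus ?thesis using nx by (simp add: pos_le_divide_eq)
  qed
  thus ?thesis using l by (metis mult.commute)
qed

section \<open>Recentered barriers\<close>

definition rcoef :: "'p recenter \<Rightarrow> 'p::finite \<Rightarrow> real" where
  "rcoef rc i = (case rc of GradRecenter \<Rightarrow> 1 | WeightRecenter w \<Rightarrow> 1 + w $ i)"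

definition gterm :: "(real \<Rightarrow> real) \<Rightarrow> real \<Rightarrow> real \<Rightarrow> real" where
  "gterm b d z = b z + ln d + z / d - 1"

lemma coef_ge1: "valid_recenter C d rc \<Longrightarrow> 1 \<le> rcoef rc i"
  by (cases rc) (auto simp: rcoef_def valid_recenter_def)

lemma rbarrier_repr:
  fixes C :: "real^'n::finite^'p::finite"
  assumes vr: "valid_recenter C d rc" and dpos: "\<forall>i. 0 < d $ i"
  shows "rbarrier b C d rc x = (\<Sum>i\<in>UNIV. rcoef rc i * gterm b (d $ i) (d $ i - C $ i \<bullet> x))"
proof (cases rc)
  case GradRecenter
  have "(d $ i - C $ i \<bullet> x) / d $ i - 1 = - ((C $ i \<bullet> x) / d $ i)" for i
    using dpos[rule_format, of i] by (simp add: field_simps)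
  hence "b (d $ i - C $ i \<bullet> x) + ln (d $ i) - (C $ i \<bullet> x) / d $ i
       = 1 * (b (d $ i - C $ i \<bullet> x) + ln (d $ i) + (d $ i - C $ i \<bullet> x) / d $ i - 1)" for i
    by (simp add: algebra_simps)
  thus ?thesis using GradRecenter unfolding rbarrier_def rcoef_def gterm_def
    by (intro sum.cong refl) simp
next
  case (WeightRecenter w)
  have z: "(\<Sum>i\<in>UNIV. (1 + w $ i) * ((d $ i - C $ i \<bullet> x) / d $ i - 1)) = 0"
  proof -
    have "(\<Sum>i\<in>UNIV. (1 + w $ i) * ((d $ i - C $ i \<bullet> x) / d $ i - 1))
        = - (\<Sum>i\<in>UNIV. ((1 + w $ i) / d $ i) *\<^sub>R C $ i) \<bullet> x"
    proof -
      have "(1 + w $ i) * ((d $ i - C $ i \<bullet> x) / d $ i - 1) = - ((((1 + w $ i) / d $ i) *\<^sub>R C $ i) \<bullet> x)" for i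
        using dpos[rule_format, of i] by (simp add: field_simps)
      thus ?thesis by (simp add: inner_sum_left sum_negf)
    qed
    thus ?thesis using vr WeightRecenter by (simp add: valid_recenter_def)
  qed
  have "rbarrier b C d rc x = (\<Sum>i\<in>UNIV. (1 + w $ i) * (b (d $ i - C $ i \<bullet> x) + ln (d $ i)))"
    using WeightRecenter by (simp add: rbarrier_def)
  also have "\<dots> = (\<Sum>i\<in>UNIV. (1 + w $ i) * gterm b (d $ i) (d $ i - C $ i \<bullet> x)
      - (1 + w $ i) * ((d $ i - C $ i \<bullet> x) / d $ i - 1))"
    by (rule sum.cong) (simp_all add: gterm_def algebra_simps)
  also have "\<dots> = (\<Sum>i\<in>UNIV. (1 + w $ i) * gterm b (d $ i) (d $ i - C $ i \<bullet> x))
      - (\<Sum>i\<in>UNIV. (1 + w $ i) * ((d $ i - C $ i \<bullet> x) / d $ i - 1))"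
    by (rule sum_subtractf)
  finally show ?thesis using z WeightRecenter by (simp add: rcoef_def)
qed

lemma gterm_nonneg:
  assumes r: "valid_relax r" and d: "0 < \<delta>" "\<delta> \<le> dd"
  shows "0 \<le> gterm (Bhat r \<delta>) dd z"
proof (cases "z > \<delta>")
  case True
  have "ln (z / dd) \<le> z / dd - 1" by (rule ln_le_minus_one) (use True d in simp)
  hence "ln z - ln dd \<le> z / dd - 1" using True d by (simp add: ln_div)
  thus ?thesis using True by (simp add: gterm_def Bhat_def)
next
  case False
  have lb: "- ln \<delta> - (z - \<delta>) / \<delta> \<le> Bhat r \<delta> z" using Bhat_le_lb[OF r d(1)] False by simp
  have "(\<delta> - z) * (1 / dd) \<le> (\<delta> - z) * (1 / \<delta>)"
    using False d by (intro mult_left_mono) (auto simp: frac_le)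
  moreover have "(\<delta> - z) * (1 / dd) = \<delta> / dd - z / dd" by (simp add: diff_divide_distrib)
  moreover have "(\<delta> - z) * (1 / \<delta>) = - ((z - \<delta>) / \<delta>)" by (simp add: minus_divide_left)
  ultimately have a: "\<delta> / dd - z / dd \<le> - ((z - \<delta>) / \<delta>)" by simp
  have "ln (\<delta> / dd) \<le> \<delta> / dd - 1" by (rule ln_le_minus_one) (use d in simp)
  hence b: "ln \<delta> - ln dd \<le> \<delta> / dd - 1" using d by (simp add: ln_div)
  show ?thesis using lb a b unfolding gterm_def by linarith
qed

lemma gterm_lb:
  assumes r: "valid_relax r" and d: "0 < \<delta>" "\<delta> \<le> dd" and z: "z \<le> \<delta>"
  shows "- ln \<delta> + ln dd - 1 \<le> gterm (Bhat r \<delta>) dd z"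
proof -
  have lb: "- ln \<delta> - (z - \<delta>) / \<delta> \<le> Bhat r \<delta> z" using Bhat_le_lb[OF r d(1) z] .
  have "(\<delta> - z) * (1 / dd) \<le> (\<delta> - z) * (1 / \<delta>)"
    using z d by (intro mult_left_mono) (auto simp: frac_le)
  moreover have "(\<delta> - z) * (1 / dd) = \<delta> / dd - z / dd" by (simp add: diff_divide_distrib)
  moreover have "(\<delta> - z) * (1 / \<delta>) = - ((z - \<delta>) / \<delta>)" by (simp add: minus_divide_left)
  ultimately have a: "\<delta> / dd - z / dd \<le> - ((z - \<delta>) / \<delta>)" by simp
  have "0 \<le> \<delta> / dd" using d by simp
  thus ?thesis using lb a unfolding gterm_def by linarith
qed

lemma rb_ge_term:
  fixes C :: "real^'n::finite^'p::finite"
  assumes vr: "valid_recenter C d rc" and dpos: "\<forall>i. 0 < d $ i" and r: "valid_relax r"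
    and dl: "0 < \<delta>" "\<forall>i. \<delta> \<le> d $ i"
  shows "gterm (Bhat r \<delta>) (d $ i) (d $ i - C $ i \<bullet> x) \<le> rbarrier (Bhat r \<delta>) C d rc x"
proof -
  have nn: "0 \<le> rcoef rc j * gterm (Bhat r \<delta>) (d $ j) (d $ j - C $ j \<bullet> x)" for j
    using coef_ge1[OF vr, of j] gterm_nonneg[OF r dl(1) dl(2)[rule_format, of j]] by simp
  have "gterm (Bhat r \<delta>) (d $ i) (d $ i - C $ i \<bullet> x) \<le> rcoef rc i * gterm (Bhat r \<delta>) (d $ i) (d $ i - C $ i \<bullet> x)"
    using mult_right_mono[OF coef_ge1[OF vr, of i] gterm_nonneg[OF r dl(1) dl(2)[rule_format, of i]]]
    by simp
  also have "\<dots> \<le> (\<Sum>j\<in>UNIV. rcoef rc j * gterm (Bhat r \<delta>) (d $ j) (d $ j - C $ j \<bullet> x))"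
    by (rule member_le_sum) (use nn in auto)
  finally show ?thesis using rbarrier_repr[OF vr dpos] by simp
qed

lemma rb_nonneg:
  fixes C :: "real^'n::finite^'p::finite"
  assumes vr: "valid_recenter C d rc" and dpos: "\<forall>i. 0 < d $ i" and r: "valid_relax r"
    and dl: "0 < \<delta>" "\<forall>i. \<delta> \<le> d $ i"
  shows "0 \<le> rbarrier (Bhat r \<delta>) C d rc x"
proof -
  have nn: "0 \<le> rcoef rc j * gterm (Bhat r \<delta>) (d $ j) (d $ j - C $ j \<bullet> x)" for j
    using coef_ge1[OF vr, of j] gterm_nonneg[OF r dl(1) dl(2)[rule_format, of j]] by simp
  thus ?thesis using rbarrier_repr[OF vr dpos] by (simp add: sum_nonneg)
qed

lemma rb_eq_log:
  assumes "\<forall>i. \<delta> < d $ i - C $ i \<bullet> x"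
  shows "rbarrier (Bhat r \<delta>) C d rc x = rbarrier (\<lambda>z. - ln z) C d rc x"
  unfolding rbarrier_def using assms by (intro sum.cong refl) (auto simp: Bhat_gt split: recenter.splits)

lemma cvx_scale: "(gm::real) \<le> (1 - t) * ga + t * gb \<Longrightarrow> 0 \<le> c \<Longrightarrow> c * gm \<le> (1 - t) * (c * ga) + t * (c * gb)"
  by (drule mult_left_mono[of _ _ c]) (simp_all add: algebra_simps)

lemma rb_convex:
  fixes C :: "real^'n::finite^'p::finite"
  assumes vr: "valid_recenter C d rc" and dpos: "\<forall>i. 0 < d $ i" and r: "valid_relax r"
    and dl: "0 < \<delta>" and t: "0 \<le> t" "t \<le> 1"
  shows "rbarrier (Bhat r \<delta>) C d rc ((1 - t) *\<^sub>R x + t *\<^sub>R y)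
     \<le> (1 - t) * rbarrier (Bhat r \<delta>) C d rc x + t * rbarrier (Bhat r \<delta>) C d rc y"
proof -
  have g: "gterm (Bhat r \<delta>) dd ((1 - t) * a + t * b) \<le> (1 - t) * gterm (Bhat r \<delta>) dd a + t * gterm (Bhat r \<delta>) dd b"
    for dd a b
  proof -
    have "Bhat r \<delta> ((1 - t) * a + t * b) \<le> (1 - t) * Bhat r \<delta> a + t * Bhat r \<delta> b"
      by (rule Bhat_convex[OF r dl t])
    moreover have "((1 - t) * a + t * b) / dd = (1 - t) * (a / dd) + t * (b / dd)"
      by (simp add: add_divide_distrib)
    ultimately show ?thesis unfolding gterm_def by (simp add: algebra_simps)
  qed
  have zi: "d $ i - C $ i \<bullet> ((1 - t) *\<^sub>R x + t *\<^sub>R y) = (1 - t) * (d $ i - C $ i \<bullet> x) + t * (d $ i - C $ i \<bullet> y)" for i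
    by (simp add: inner_add_right algebra_simps)
  have "rbarrier (Bhat r \<delta>) C d rc ((1 - t) *\<^sub>R x + t *\<^sub>R y)
      = (\<Sum>i\<in>UNIV. rcoef rc i * gterm (Bhat r \<delta>) (d $ i) ((1 - t) * (d $ i - C $ i \<bullet> x) + t * (d $ i - C $ i \<bullet> y)))"
    by (simp add: rbarrier_repr[OF vr dpos] zi)
  also have "\<dots> \<le> (\<Sum>i\<in>UNIV. (1 - t) * (rcoef rc i * gterm (Bhat r \<delta>) (d $ i) (d $ i - C $ i \<bullet> x))
      + t * (rcoef rc i * gterm (Bhat r \<delta>) (d $ i) (d $ i - C $ i \<bullet> y)))"
  proof (rule sum_mono)
    fix i
    have "0 \<le> rcoef rc i" using coef_ge1[OF vr, of i] by simp
    from cvx_scale[OF g this]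
    show "rcoef rc i * gterm (Bhat r \<delta>) (d $ i) ((1 - t) * (d $ i - C $ i \<bullet> x) + t * (d $ i - C $ i \<bullet> y))
      \<le> (1 - t) * (rcoef rc i * gterm (Bhat r \<delta>) (d $ i) (d $ i - C $ i \<bullet> x))
      + t * (rcoef rc i * gterm (Bhat r \<delta>) (d $ i) (d $ i - C $ i \<bullet> y))" .
  qed
  also have "\<dots> = (1 - t) * rbarrier (Bhat r \<delta>) C d rc x + t * rbarrier (Bhat r \<delta>) C d rc y"
    by (simp add: rbarrier_repr[OF vr dpos] sum.distrib sum_distrib_left)
  finally show ?thesis .
qed



section \<open>Predictions\<close>

lemma pred_cong: "(\<And>j. j < k \<Longrightarrow> u j = v j) \<Longrightarrow> pred A B x u k = pred A B x v k"
  by (induction k) auto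

lemma pred_lin:
  "pred A B (a *\<^sub>R x + b *\<^sub>R y) (\<lambda>j. a *\<^sub>R u j + b *\<^sub>R v j) k
     = a *\<^sub>R pred A B x u k + b *\<^sub>R pred A B y v k"
  for A :: "real^'n::finite^'n" and B :: "real^'m::finite^'n"
  by (induction k) (simp_all add: matrix_vector_right_distrib matrix_vector_mult_scaleR algebra_simps)

lemma pred_diff:
  "pred A B x u k - pred A B x v k = pred A B 0 (\<lambda>j. u j - v j) k"
  for A :: "real^'n::finite^'n" and B :: "real^'m::finite^'n"
  by (induction k) (simp_all add: matrix_vector_mult_diff_distrib algebra_simps)

lemma pred_shift:
  "pred A B (A *v x + B *v u 0) (\<lambda>j. u (Suc j)) k = pred A B x u (Suc k)"
  by (induction k) simp_all

lemma pred_mid: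
  "pred A B x (\<lambda>j. (1/2) *\<^sub>R (u j + v j)) k = (1/2) *\<^sub>R (pred A B x u k + pred A B x v k)"
  for A :: "real^'n::finite^'n" and B :: "real^'m::finite^'n"
proof -
  have "pred A B ((1/2) *\<^sub>R x + (1/2) *\<^sub>R x) (\<lambda>j. (1/2) *\<^sub>R u j + (1/2) *\<^sub>R v j) k
     = (1/2) *\<^sub>R pred A B x u k + (1/2) *\<^sub>R pred A B x v k" by (rule pred_lin)
  moreover have "(1/2) *\<^sub>R x + (1/2) *\<^sub>R x = x" by (simp add: scaleR_2[symmetric] del: scaleR_half_double)
  ultimately show ?thesis by (simp add: scaleR_right_distrib)
qed

lemma pred_bound:
  fixes A :: "real^'n::finite^'n" and B :: "real^'m::finite^'n"
  shows "\<exists>c\<ge>0. \<forall>x u k. k \<le> N \<longrightarrow> norm (pred A B x u k) \<le> c * (norm x + (\<Sum>j<N. norm (u j)))"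
proof -
  obtain a where a: "a \<ge> 0" "\<And>x. norm (A *v x) \<le> a * norm x" using mvec_bound[of A] by auto
  obtain b where b: "b \<ge> 0" "\<And>x. norm (B *v x) \<le> b * norm x" using mvec_bound[of B] by auto
  define q where "q = 1 + a + b"
  have q: "1 \<le> q" using a b by (simp add: q_def)
  have main: "norm (pred A B x u k) \<le> q ^ k * (norm x + (\<Sum>j<k. norm (u j)))" for x u k
  proof (induction k)
    case 0 show ?case by simp
  next
    case (Suc k)
    let ?S = "norm x + (\<Sum>j<k. norm (u j))"
    have S0: "0 \<le> ?S" by (simp add: sum_nonneg)
    have qk: "1 \<le> q ^ k" using q by simp
    have "norm (pred A B x u (Suc k)) \<le> norm (A *v pred A B x u k) + norm (B *v u k)"
      by (simp add: norm_triangle_ineq)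
    also have "\<dots> \<le> a * (q ^ k * ?S) + b * norm (u k)"
      using a b Suc by (intro add_mono order.trans[OF a(2)] order.trans[OF b(2)] mult_left_mono) auto
    also have "\<dots> \<le> a * (q ^ k * (?S + norm (u k))) + b * (q ^ k * (?S + norm (u k)))"
    proof -
      have "q ^ k * ?S \<le> q ^ k * (?S + norm (u k))" using qk by (intro mult_left_mono) auto
      moreover have "norm (u k) \<le> q ^ k * (?S + norm (u k))"
      proof -
        have "norm (u k) \<le> 1 * (?S + norm (u k))" using S0 by simp
        also have "\<dots> \<le> q ^ k * (?S + norm (u k))" using qk S0 by (intro mult_right_mono) auto
        finally show ?thesis .
      qed
      ultimately show ?thesis using mult_left_mono[of _ _ a] mult_left_mono[of _ _ b] a(1) b(1)
        by (meson add_mono)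
    qed
    also have "\<dots> \<le> q * (q ^ k * (?S + norm (u k)))"
    proof -
      have T: "0 \<le> q ^ k * (?S + norm (u k))" using S0 q by simp
      show ?thesis using T unfolding q_def by (simp add: distrib_right)
    qed
    finally show ?case by (simp add: add.assoc)
  qed
  have "norm (pred A B x u k) \<le> q ^ N * (norm x + (\<Sum>j<N. norm (u j)))" if "k \<le> N" for x u k
  proof -
    have "q ^ k * (norm x + (\<Sum>j<k. norm (u j))) \<le> q ^ N * (norm x + (\<Sum>j<N. norm (u j)))"
      using that q by (intro mult_mono power_increasing add_left_mono sum_mono2) (auto simp: sum_nonneg)
    thus ?thesis using main[of x u k] by linarith
  qed
  thus ?thesis using q by (intro exI[of _ "q ^ N"]) auto
qed

lemma pred_feedback:
  "pred A B x (\<lambda>j. K *v ((((*v) (A + B ** K)) ^^ j) x)) k = (((*v) (A + B ** K)) ^^ k) x"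
  by (induction k) (simp_all add: matrix_vector_mult_add_rdistrib matrix_vector_mul_assoc)

lemma closed_pred:
  assumes "\<And>k. xs (Suc k) = A *v xs k + B *v us k 0"
  shows "xs (k + j) = pred A B (xs k) (\<lambda>i. us (k + i) 0) j"
  by (induction j) (simp_all add: assms)

section \<open>Misc\<close>

lemma finite_uniform_pos:
  fixes P :: "'a::finite \<Rightarrow> real \<Rightarrow> bool"
  assumes "\<And>i. \<exists>m>0. \<forall>m'. 0 < m' \<and> m' \<le> m \<longrightarrow> P i m'"
  shows "\<exists>m>0. \<forall>i. P i m"
proof -
  from assms obtain f where f: "\<And>i. f i > 0" "\<And>i m'. 0 < m' \<Longrightarrow> m' \<le> f i \<Longrightarrow> P i m'"
    by metis
  define m where "m = Min (range f)"
  have "m \<in> range f" unfolding m_def by (rule Min_in) auto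
  hence m0: "m > 0" using f by auto
  have "m \<le> f i" for i unfolding m_def by (rule Min_le) auto
  thus ?thesis using f m0 by blast
qed

section \<open>Perturbed stable linear systems\<close>

lemma mpow_add: "(((*v) M) ^^ m) (a + b) = (((*v) M) ^^ m) a + (((*v) M) ^^ m) b"
  for M :: "real^'n::finite^'n"
  by (induction m) (simp_all add: matrix_vector_right_distrib)

lemma perturbed_formula:
  fixes M :: "real^'n::finite^'n"
  assumes rec: "\<And>k. y (Suc k) = M *v y k + e k"
  shows "y (k + m) = (((*v) M) ^^ m) (y k) + (\<Sum>i<m. (((*v) M) ^^ (m - Suc i)) (e (k + i)))"
proof (induction m arbitrary: k)
  case 0 show ?case by simp
next
  case (Suc m)
  have "y (k + Suc m) = y (Suc k + m)" by simp
  also have "\<dots> = (((*v) M) ^^ m) (y (Suc k)) + (\<Sum>i<m. (((*v) M) ^^ (m - Suc i)) (e (Suc k + i)))"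
    by (rule Suc.IH)
  also have "(((*v) M) ^^ m) (y (Suc k)) = (((*v) M) ^^ Suc m) (y k) + (((*v) M) ^^ m) (e k)"
    by (simp only: rec mpow_add funpow_Suc_right o_def)
  also have "(\<Sum>i<m. (((*v) M) ^^ (m - Suc i)) (e (Suc k + i))) = (\<Sum>i<m. (((*v) M) ^^ (Suc m - Suc (Suc i))) (e (k + Suc i)))"
    by simp
  finally have 1: "y (k + Suc m) = (((*v) M) ^^ Suc m) (y k) + ((((*v) M) ^^ (Suc m - Suc 0)) (e (k + 0))
     + (\<Sum>i<m. (((*v) M) ^^ (Suc m - Suc (Suc i))) (e (k + Suc i))))"
    by (simp only: add.assoc diff_Suc_Suc diff_zero add_0_right)
  have 2: "(\<Sum>i<Suc m. (((*v) M) ^^ (Suc m - Suc i)) (e (k + i)))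
     = (((*v) M) ^^ (Suc m - Suc 0)) (e (k + 0)) + (\<Sum>i<m. (((*v) M) ^^ (Suc m - Suc (Suc i))) (e (k + Suc i)))"
    by (rule sum.lessThan_Suc_shift)
  show ?case using 1 2 by simp
qed

lemma perturbed_stable:
  fixes M :: "real^'n::finite^'n"
  assumes dec: "\<And>k x. norm ((((*v) M) ^^ k) x) \<le> c * \<rho>^k * norm x"
    and rho: "0 < \<rho>" "\<rho> < 1"
    and bnd: "\<And>k. norm (y k) \<le> Y"
    and rec: "\<And>k. y (Suc k) = M *v y k + e k"
    and e: "e \<longlonglongrightarrow> 0"
  shows "y \<longlonglongrightarrow> 0"
proof (rule LIMSEQ_I)
  fix r :: real assume r: "0 < r"
  define c' where "c' = max c 1"
  have c': "1 \<le> c'" "c \<le> c'" by (auto simp: c'_def)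
  have dec': "norm ((((*v) M) ^^ k) x) \<le> c' * \<rho>^k * norm x" for k x
    using dec[of k x] c' rho by (smt (verit) mult_right_mono norm_ge_zero zero_le_power)
  have Y0: "0 \<le> Y" using bnd[of 0] by (meson norm_ge_zero order_trans)
  have "(\<lambda>m. c' * \<rho> ^ m * Y) \<longlonglongrightarrow> c' * 0 * Y"
    using rho by (intro tendsto_intros LIMSEQ_power_zero) auto
  then obtain m where m: "\<bar>c' * \<rho> ^ m * Y\<bar> < r / 2"
    using r by (auto dest!: LIMSEQ_D[of _ 0 "r/2"])
  define E where "E = r * (1 - \<rho>) / (2 * c')"
  have E: "0 < E" using r rho c' by (simp add: E_def)
  obtain k0 where k0: "\<And>i. i \<ge> k0 \<Longrightarrow> norm (e i) < E"
    using LIMSEQ_D[OF e E] by auto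
  have geo: "(\<Sum>i<m. \<rho> ^ (m - Suc i)) \<le> 1 / (1 - \<rho>)"
  proof -
    have "(\<Sum>i<m. \<rho> ^ (m - Suc i)) = (\<Sum>i<m. \<rho> ^ i)" by (rule sum.nat_diff_reindex)
    also have "\<dots> \<le> suminf (\<lambda>i. \<rho> ^ i)"
      using rho by (intro sum_le_suminf summable_geometric) auto
    also have "\<dots> = 1 / (1 - \<rho>)" using rho by (intro suminf_geometric) auto
    finally show ?thesis .
  qed
  show "\<exists>no. \<forall>n\<ge>no. norm (y n - 0) < r"
  proof (intro exI allI impI)
    fix n assume n: "n \<ge> k0 + m"
    define k where "k = n - m"
    have nk: "n = k + m" and kk: "k \<ge> k0" using n by (auto simp: k_def)
    have yn: "y n = (((*v) M) ^^ m) (y k) + (\<Sum>i<m. (((*v) M) ^^ (m - Suc i)) (e (k + i)))"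
      unfolding nk by (rule perturbed_formula) (rule rec)
    have "norm (y n) \<le> norm ((((*v) M) ^^ m) (y k)) + norm (\<Sum>i<m. (((*v) M) ^^ (m - Suc i)) (e (k + i)))"
      unfolding yn by (rule norm_triangle_ineq)
    also have "norm ((((*v) M) ^^ m) (y k)) \<le> c' * \<rho>^m * Y"
      using dec'[of m "y k"] bnd[of k] c' rho by (smt (verit) mult_left_mono zero_le_power mult_nonneg_nonneg)
    also have "norm (\<Sum>i<m. (((*v) M) ^^ (m - Suc i)) (e (k + i))) \<le> (\<Sum>i<m. c' * \<rho> ^ (m - Suc i) * E)"
    proof -
      have "norm (\<Sum>i<m. (((*v) M) ^^ (m - Suc i)) (e (k + i))) \<le> (\<Sum>i<m. norm ((((*v) M) ^^ (m - Suc i)) (e (k + i))))"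
        by (rule norm_sum)
      also have "\<dots> \<le> (\<Sum>i<m. c' * \<rho> ^ (m - Suc i) * E)"
      proof (rule sum_mono)
        fix i assume "i \<in> {..<m}"
        have "norm (e (k + i)) \<le> E" using k0[of "k + i"] kk by simp
        hence "c' * \<rho> ^ (m - Suc i) * norm (e (k + i)) \<le> c' * \<rho> ^ (m - Suc i) * E"
          using c' rho by (intro mult_left_mono) auto
        thus "norm ((((*v) M) ^^ (m - Suc i)) (e (k + i))) \<le> c' * \<rho> ^ (m - Suc i) * E"
          using dec'[of "m - Suc i" "e (k + i)"] by linarith
      qed
      finally show ?thesis .
    qed
    also have "(\<Sum>i<m. c' * \<rho> ^ (m - Suc i) * E) = c' * E * (\<Sum>i<m. \<rho> ^ (m - Suc i))"
      by (simp add: sum_distrib_left algebra_simps)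
    also have "\<dots> \<le> c' * E * (1 / (1 - \<rho>))"
      using geo c' E by (intro mult_left_mono) auto
    also have "c' * E * (1 / (1 - \<rho>)) = r / 2" using c' rho by (simp add: E_def field_simps)
    finally have "norm (y n) \<le> c' * \<rho>^m * Y + r / 2" by simp
    moreover have "c' * \<rho>^m * Y < r / 2" using m by simp
    ultimately show "norm (y n - 0) < r" by simp
  qed
qed



locale mpc =
  fixes A :: "real^'n::finite^'n" and B :: "real^'m::finite^'n"
    and Cx :: "real^'n^'p::finite" and dx :: "real^'p"
    and Cu :: "real^'m^'q::finite" and du :: "real^'q"
    and Q :: "real^'n^'n" and R :: "real^'m^'m"
    and N :: nat and \<epsilon> :: real
    and r :: relax_kind and rcx :: "'p recenter" and rcu :: "'q recenter"
    and K :: "real^'n^'m" and M :: "real^'n^'n" and NN :: "(real^'n) set"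
    and P :: "real^'n^'n" and \<phi> :: "real^'n \<Rightarrow> real"
  assumes dx_pos: "\<forall>i. 0 < dx $ i" and du_pos: "\<forall>j. 0 < du $ j"
    and Q_psd: "psd Q" and R_pd: "pd R"
    and N_pos: "1 \<le> N" and eps_pos: "0 < \<epsilon>"
    and r_valid: "valid_relax r"
    and rcx_valid: "valid_recenter Cx dx rcx" and rcu_valid: "valid_recenter Cu du rcu"
    and NN_compact: "compact NN"
    and NN_bound: "\<forall>x\<in>NN. strictly_in Cx dx x \<and> strictly_in Cu du (K *v x) \<and>
                      log_barrier Cx dx rcx x + log_barrier Cu du rcu (K *v x) \<le> qf M x"
    and P_pd: "pd P"
    and P_lyap: "P = transpose (A + B ** K) ** P ** (A + B ** K) + transpose K ** R ** K + Q + \<epsilon> *\<^sub>R M"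
    and phi_cont: "continuous_on UNIV \<phi>"
    and phi_convex: "convex_on UNIV \<phi>"
    and phi_0: "\<phi> 0 = 0" and phi_pos: "\<forall>x. x \<noteq> 0 \<longrightarrow> 0 < \<phi> x"
    and phi_dec: "\<forall>x. \<phi> x \<le> 1 \<longrightarrow> \<phi> ((A + B ** K) *v x) \<le> \<phi> x"
    and Xf_sub: "{x. \<phi> x \<le> 1} \<subseteq> NN"
begin

abbreviation "AK \<equiv> A + B ** K"
abbreviation "bx \<delta> \<equiv> relaxed_barrier r \<delta> Cx dx rcx"
abbreviation "bu \<delta> \<equiv> relaxed_barrier r \<delta> Cu du rcu"
abbreviation "J \<delta> \<equiv> relaxed_cost A B Q R \<epsilon> N r \<delta> Cx dx rcx Cu du rcu P \<phi>"

definition ellh :: "real \<Rightarrow> real^'n \<Rightarrow> real^'m \<Rightarrow> real" where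
  "ellh \<delta> x v = qf Q x + qf R v + \<epsilon> * bu \<delta> v + \<epsilon> * bx \<delta> x"

definition Fh :: "real \<Rightarrow> real^'n \<Rightarrow> real" where
  "Fh \<delta> x = qf P x + \<epsilon> * Bhat r \<delta> (1 - \<phi> x)"

lemma cost_split: "J \<delta> x u = (\<Sum>k<N. ellh \<delta> (pred A B x u k) (u k)) + Fh \<delta> (pred A B x u N)"
  unfolding relaxed_cost_def ellh_def Fh_def by simp

lemma phi_nonneg: "0 \<le> \<phi> x"
  using phi_0 phi_pos by (cases "x = 0") (auto intro: less_imp_le)

definition good :: "real \<Rightarrow> bool" where
  "good \<delta> \<longleftrightarrow> 0 < \<delta> \<and> \<delta> \<le> 1/2 \<and> (\<forall>i. \<delta> \<le> dx $ i) \<and> (\<forall>j. \<delta> \<le> du $ j)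
     \<and> (\<forall>x\<in>NN. (\<forall>i. \<delta> < dx $ i - Cx $ i \<bullet> x) \<and> (\<forall>j. \<delta> < du $ j - Cu $ j \<bullet> (K *v x)))"

lemma bx_nonneg: "good \<delta> \<Longrightarrow> 0 \<le> bx \<delta> x"
  unfolding relaxed_barrier_def good_def by (rule rb_nonneg[OF rcx_valid dx_pos r_valid]) auto

lemma bu_nonneg: "good \<delta> \<Longrightarrow> 0 \<le> bu \<delta> v"
  unfolding relaxed_barrier_def good_def by (rule rb_nonneg[OF rcu_valid du_pos r_valid]) auto

lemma Bterm_nonneg: assumes "good \<delta>" shows "0 \<le> Bhat r \<delta> (1 - \<phi> x)"
proof -
  have d: "0 < \<delta>" "\<delta> < 1" using assms by (auto simp: good_def)
  have "Bhat r \<delta> 1 \<le> Bhat r \<delta> (1 - \<phi> x)"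
    by (rule Bhat_antimono[OF r_valid d(1)]) (use phi_nonneg[of x] in simp)
  moreover have "Bhat r \<delta> 1 = 0" using d by (simp add: Bhat_def)
  ultimately show ?thesis by simp
qed

lemma pd_nonneg: "pd X \<Longrightarrow> 0 \<le> qf X x"
  by (cases "x = 0") (auto simp: pd_def qf_def less_imp_le)

lemma ellh_nonneg: assumes "good \<delta>" shows "0 \<le> ellh \<delta> x v"
proof -
  have "0 \<le> qf Q x" "0 \<le> qf R v" "0 \<le> \<epsilon> * bu \<delta> v" "0 \<le> \<epsilon> * bx \<delta> x"
    using qf_nonneg[OF Q_psd] pd_nonneg[OF R_pd] bx_nonneg[OF assms] bu_nonneg[OF assms] eps_pos
    by auto
  thus ?thesis unfolding ellh_def by linarith
qed

lemma Fh_nonneg: "good \<delta> \<Longrightarrow> 0 \<le> Fh \<delta> x"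
  unfolding Fh_def using Bterm_nonneg eps_pos P_pd
  by (simp add: pd_def qf_def) (metis mult_nonneg_nonneg less_imp_le norm_zero inner_zero_left
      matrix_vector_mult_0_right order_refl add_nonneg_nonneg)

lemma bx_eq_log: "good \<delta> \<Longrightarrow> x \<in> NN \<Longrightarrow> bx \<delta> x = log_barrier Cx dx rcx x"
  unfolding relaxed_barrier_def log_barrier_def good_def by (rule rb_eq_log) auto

lemma bu_eq_log: "good \<delta> \<Longrightarrow> x \<in> NN \<Longrightarrow> bu \<delta> (K *v x) = log_barrier Cu du rcu (K *v x)"
  unfolding relaxed_barrier_def log_barrier_def good_def by (rule rb_eq_log) auto

lemma terminal_decrease:
  assumes g: "good \<delta>" and x: "\<phi> x \<le> 1"
  shows "Fh \<delta> (AK *v x) + ellh \<delta> x (K *v x) \<le> Fh \<delta> x"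
proof -
  have xN: "x \<in> NN" using x Xf_sub by auto
  have d: "0 < \<delta>" using g by (simp add: good_def)
  have lyap: "qf P x = qf P (AK *v x) + qf R (K *v x) + qf Q x + \<epsilon> * qf M x"
    by (subst P_lyap) (simp add: qf_madd qf_transp qf_mscale)
  have nb: "log_barrier Cx dx rcx x + log_barrier Cu du rcu (K *v x) \<le> qf M x"
    using NN_bound xN by auto
  have bt: "Bhat r \<delta> (1 - \<phi> (AK *v x)) \<le> Bhat r \<delta> (1 - \<phi> x)"
    by (rule Bhat_antimono[OF r_valid d]) (use phi_dec x in auto)
  have "\<epsilon> * (bx \<delta> x + bu \<delta> (K *v x)) \<le> \<epsilon> * qf M x"
    using nb bx_eq_log[OF g xN] bu_eq_log[OF g xN] eps_pos by simp
  thus ?thesis using lyap bt eps_pos unfolding Fh_def ellh_def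
    by (smt (verit, best) mult_left_mono distrib_left)
qed

definition shiftu :: "real^'n \<Rightarrow> (nat \<Rightarrow> real^'m) \<Rightarrow> nat \<Rightarrow> real^'m" where
  "shiftu x u = (\<lambda>k. if Suc k < N then u (Suc k) else K *v pred A B x u N)"

lemma shiftu_lt: "Suc k < N \<Longrightarrow> shiftu x u k = u (Suc k)"
  by (simp add: shiftu_def)

lemma shiftu_last: "Suc k = N \<Longrightarrow> shiftu x u k = K *v pred A B x u N"
  by (simp add: shiftu_def)

lemma shift_pred:
  assumes "k < N"
  shows "pred A B (A *v x + B *v u 0) (shiftu x u) k = pred A B x u (Suc k)"
proof -
  have "pred A B (A *v x + B *v u 0) (shiftu x u) k = pred A B (A *v x + B *v u 0) (\<lambda>j. u (Suc j)) k"
    by (rule pred_cong) (use assms in \<open>auto simp: shiftu_def\<close>)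
  thus ?thesis by (simp add: pred_shift)
qed

lemma shift_pred_N:
  "pred A B (A *v x + B *v u 0) (shiftu x u) N = AK *v pred A B x u N"
proof -
  obtain N' where N': "N = Suc N'" using N_pos by (cases N) auto
  have "pred A B (A *v x + B *v u 0) (shiftu x u) N
      = A *v pred A B (A *v x + B *v u 0) (shiftu x u) N' + B *v shiftu x u N'"
    using N' by simp
  also have "\<dots> = A *v pred A B x u N + B *v (K *v pred A B x u N)"
    using shift_pred[of N' x u] shiftu_last[of N' x u] N' by simp
  finally have "pred A B (A *v x + B *v u 0) (shiftu x u) N
      = A *v pred A B x u N + B *v (K *v pred A B x u N)" .
  thus ?thesis by (simp add: matrix_vector_mult_add_rdistrib matrix_vector_mul_assoc)
qed

lemma shift_cost:
  "J \<delta> (A *v x + B *v u 0) (shiftu x u) = J \<delta> x u - ellh \<delta> x (u 0) - Fh \<delta> (pred A B x u N)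
     + ellh \<delta> (pred A B x u N) (K *v pred A B x u N) + Fh \<delta> (AK *v pred A B x u N)"
proof -
  obtain N' where N': "N = Suc N'" using N_pos by (cases N) auto
  let ?x1 = "A *v x + B *v u 0"
  let ?w = "shiftu x u"
  let ?y = "pred A B x u N"
  have s1: "(\<Sum>k<N. ellh \<delta> (pred A B ?x1 ?w k) (?w k))
      = (\<Sum>k<N'. ellh \<delta> (pred A B x u (Suc k)) (u (Suc k))) + ellh \<delta> ?y (K *v ?y)"
  proof -
    have "(\<Sum>k<N. ellh \<delta> (pred A B ?x1 ?w k) (?w k))
        = (\<Sum>k<N'. ellh \<delta> (pred A B ?x1 ?w k) (?w k)) + ellh \<delta> (pred A B ?x1 ?w N') (?w N')"
      using N' by simp
    also have "(\<Sum>k<N'. ellh \<delta> (pred A B ?x1 ?w k) (?w k)) = (\<Sum>k<N'. ellh \<delta> (pred A B x u (Suc k)) (u (Suc k)))"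
    proof (rule sum.cong)
      fix k assume "k \<in> {..<N'}"
      hence k: "Suc k < N" "k < N" using N' by auto
      show "ellh \<delta> (pred A B ?x1 ?w k) (?w k) = ellh \<delta> (pred A B x u (Suc k)) (u (Suc k))"
        using shift_pred[OF k(2)] shiftu_lt[OF k(1)] by simp
    qed simp
    also have "ellh \<delta> (pred A B ?x1 ?w N') (?w N') = ellh \<delta> ?y (K *v ?y)"
      using shift_pred[of N' x u] shiftu_last[of N' x u] N' by simp
    finally show ?thesis .
  qed
  have s2: "(\<Sum>k<N. ellh \<delta> (pred A B x u k) (u k))
      = ellh \<delta> x (u 0) + (\<Sum>k<N'. ellh \<delta> (pred A B x u (Suc k)) (u (Suc k)))"
    using sum.lessThan_Suc_shift[of "\<lambda>k. ellh \<delta> (pred A B x u k) (u k)" N'] N' by simp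
  show ?thesis unfolding cost_split s1 shift_pred_N using s2 by simp
qed

lemma shift_decrease:
  assumes g: "good \<delta>" and y: "\<phi> (pred A B x u N) \<le> 1"
  shows "J \<delta> (A *v x + B *v u 0) (shiftu x u) \<le> J \<delta> x u - ellh \<delta> x (u 0)"
  using shift_cost[of \<delta> x u] terminal_decrease[OF g y] by simp

end



context mpc begin

definition cmin :: real where
  "cmin = Min (insert 0 (range (\<lambda>i. ln (dx $ i) - 1) \<union> range (\<lambda>j. ln (du $ j) - 1)))"

lemma cmin_le: "cmin \<le> 0" "cmin \<le> ln (dx $ i) - 1" "cmin \<le> ln (du $ j) - 1"
  unfolding cmin_def by (rule Min_le; simp)+

definition Lb :: "real \<Rightarrow> real" where "Lb \<delta> = \<epsilon> * (- ln \<delta> + cmin)"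

lemma ellh_le_J: assumes g: "good \<delta>" and k: "k < N"
  shows "ellh \<delta> (pred A B x u k) (u k) \<le> J \<delta> x u"
proof -
  have "ellh \<delta> (pred A B x u k) (u k) \<le> (\<Sum>k<N. ellh \<delta> (pred A B x u k) (u k))"
    by (rule member_le_sum) (use k ellh_nonneg[OF g] in auto)
  thus ?thesis using Fh_nonneg[OF g, of "pred A B x u N"] cost_split[of \<delta> x u] by linarith
qed

lemma Fh_le_J: assumes g: "good \<delta>" shows "Fh \<delta> (pred A B x u N) \<le> J \<delta> x u"
proof -
  have "0 \<le> (\<Sum>k<N. ellh \<delta> (pred A B x u k) (u k))" by (rule sum_nonneg) (use ellh_nonneg[OF g] in auto)
  thus ?thesis using cost_split[of \<delta> x u] by linarith
qed

lemma comps_le_J: assumes g: "good \<delta>" and k: "k < N"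
  shows "\<epsilon> * bx \<delta> (pred A B x u k) \<le> J \<delta> x u" "\<epsilon> * bu \<delta> (u k) \<le> J \<delta> x u"
    "qf R (u k) \<le> J \<delta> x u" "qf P (pred A B x u N) \<le> J \<delta> x u"
    "\<epsilon> * Bhat r \<delta> (1 - \<phi> (pred A B x u N)) \<le> J \<delta> x u"
proof -
  have n: "0 \<le> qf Q (pred A B x u k)" "0 \<le> qf R (u k)" "0 \<le> \<epsilon> * bu \<delta> (u k)" "0 \<le> \<epsilon> * bx \<delta> (pred A B x u k)"
    using qf_nonneg[OF Q_psd] pd_nonneg[OF R_pd] bx_nonneg[OF g] bu_nonneg[OF g] eps_pos by auto
  have e: "ellh \<delta> (pred A B x u k) (u k) \<le> J \<delta> x u" by (rule ellh_le_J[OF g k])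
  show "\<epsilon> * bx \<delta> (pred A B x u k) \<le> J \<delta> x u" "\<epsilon> * bu \<delta> (u k) \<le> J \<delta> x u" "qf R (u k) \<le> J \<delta> x u"
    using n e unfolding ellh_def by linarith+
  have f: "Fh \<delta> (pred A B x u N) \<le> J \<delta> x u" by (rule Fh_le_J[OF g])
  have m: "0 \<le> qf P (pred A B x u N)" "0 \<le> \<epsilon> * Bhat r \<delta> (1 - \<phi> (pred A B x u N))"
    using pd_nonneg[OF P_pd] Bterm_nonneg[OF g] eps_pos by auto
  show "qf P (pred A B x u N) \<le> J \<delta> x u" "\<epsilon> * Bhat r \<delta> (1 - \<phi> (pred A B x u N)) \<le> J \<delta> x u"
    using f m unfolding Fh_def by linarith+
qed

lemma slack:
  assumes g: "good \<delta>" and lt: "J \<delta> x u < Lb \<delta>"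
  shows "\<And>k i. k < N \<Longrightarrow> \<delta> < dx $ i - Cx $ i \<bullet> pred A B x u k"
    and "\<And>k j. k < N \<Longrightarrow> \<delta> < du $ j - Cu $ j \<bullet> u k"
    and "\<delta> < 1 - \<phi> (pred A B x u N)"
proof -
  have d: "0 < \<delta>" "\<forall>i. \<delta> \<le> dx $ i" "\<forall>j. \<delta> \<le> du $ j" using g by (auto simp: good_def)
  show "\<delta> < dx $ i - Cx $ i \<bullet> pred A B x u k" if k: "k < N" for k i
  proof (rule ccontr)
    assume "\<not> ?thesis"
    hence z: "dx $ i - Cx $ i \<bullet> pred A B x u k \<le> \<delta>" by simp
    have "- ln \<delta> + ln (dx $ i) - 1 \<le> gterm (Bhat r \<delta>) (dx $ i) (dx $ i - Cx $ i \<bullet> pred A B x u k)"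
      by (rule gterm_lb[OF r_valid d(1) _ z]) (use d in auto)
    also have "\<dots> \<le> bx \<delta> (pred A B x u k)"
      unfolding relaxed_barrier_def by (rule rb_ge_term[OF rcx_valid dx_pos r_valid d(1,2)])
    finally have "Lb \<delta> \<le> \<epsilon> * bx \<delta> (pred A B x u k)"
      unfolding Lb_def using cmin_le(2)[of i] eps_pos by (intro mult_left_mono) auto
    thus False using comps_le_J(1)[OF g k, where x=x and u=u] lt by linarith
  qed
  show "\<delta> < du $ j - Cu $ j \<bullet> u k" if k: "k < N" for k j
  proof (rule ccontr)
    assume "\<not> ?thesis"
    hence z: "du $ j - Cu $ j \<bullet> u k \<le> \<delta>" by simp
    have "- ln \<delta> + ln (du $ j) - 1 \<le> gterm (Bhat r \<delta>) (du $ j) (du $ j - Cu $ j \<bullet> u k)"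
      by (rule gterm_lb[OF r_valid d(1) _ z]) (use d in auto)
    also have "\<dots> \<le> bu \<delta> (u k)"
      unfolding relaxed_barrier_def by (rule rb_ge_term[OF rcu_valid du_pos r_valid d(1,3)])
    finally have "Lb \<delta> \<le> \<epsilon> * bu \<delta> (u k)"
      unfolding Lb_def using cmin_le(3)[of j] eps_pos by (intro mult_left_mono) auto
    thus False using comps_le_J(2)[OF g k, where x=x and u=u] lt by linarith
  qed
  show "\<delta> < 1 - \<phi> (pred A B x u N)"
  proof (rule ccontr)
    assume "\<not> ?thesis"
    hence z: "1 - \<phi> (pred A B x u N) \<le> \<delta>" by simp
    have "- ln \<delta> - ((1 - \<phi> (pred A B x u N)) - \<delta>) / \<delta> \<le> Bhat r \<delta> (1 - \<phi> (pred A B x u N))"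
      by (rule Bhat_le_lb[OF r_valid d(1) z])
    moreover have "0 \<le> - (((1 - \<phi> (pred A B x u N)) - \<delta>) / \<delta>)" using z d by (simp add: divide_nonpos_pos)
    ultimately have "- ln \<delta> + cmin \<le> Bhat r \<delta> (1 - \<phi> (pred A B x u N))" using cmin_le(1) by linarith
    hence "Lb \<delta> \<le> \<epsilon> * Bhat r \<delta> (1 - \<phi> (pred A B x u N))"
      unfolding Lb_def using eps_pos by (intro mult_left_mono) auto
    moreover have "0 < N" using N_pos by simp
    ultimately show False using comps_le_J(5)[OF g \<open>0 < N\<close>, where x=x and u=u] lt by linarith
  qed
qed

lemma cl_step:
  assumes g: "good \<delta>" and cl: "closed_loop A B (J \<delta>) xs us" and lt: "J \<delta> (xs k) (us k) < Lb \<delta>"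
  shows "J \<delta> (xs (Suc k)) (us (Suc k)) \<le> J \<delta> (xs k) (us k) - ellh \<delta> (xs k) (us k 0)"
proof -
  have opt: "J \<delta> (xs (Suc k)) (us (Suc k)) \<le> J \<delta> (xs (Suc k)) v" for v
    using cl unfolding closed_loop_def by blast
  have xs: "xs (Suc k) = A *v xs k + B *v us k 0" using cl unfolding closed_loop_def by blast
  have "\<delta> < 1 - \<phi> (pred A B (xs k) (us k) N)" by (rule slack(3)[OF g lt])
  hence y: "\<phi> (pred A B (xs k) (us k) N) \<le> 1" using g by (auto simp: good_def)
  have "J \<delta> (xs (Suc k)) (us (Suc k)) \<le> J \<delta> (xs (Suc k)) (shiftu (xs k) (us k))" by (rule opt)
  also have "\<dots> \<le> J \<delta> (xs k) (us k) - ellh \<delta> (xs k) (us k 0)"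
    unfolding xs by (rule shift_decrease[OF g y])
  finally show ?thesis .
qed

lemma cl_invariant:
  assumes g: "good \<delta>" and cl: "closed_loop A B (J \<delta>) xs us" and lt: "J \<delta> (xs 0) (us 0) < Lb \<delta>"
  shows "J \<delta> (xs k) (us k) \<le> J \<delta> (xs 0) (us 0)"
proof (induction k)
  case 0 show ?case by simp
next
  case (Suc k)
  have "J \<delta> (xs k) (us k) < Lb \<delta>" using Suc lt by linarith
  from cl_step[OF g cl this] ellh_nonneg[OF g, of "xs k" "us k 0"] Suc show ?case by linarith
qed

lemma cl_strict:
  assumes g: "good \<delta>" and cl: "closed_loop A B (J \<delta>) xs us" and lt: "J \<delta> (xs 0) (us 0) < Lb \<delta>"
  shows "strictly_in Cx dx (xs k) \<and> strictly_in Cu du (us k 0)"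
proof -
  have lt': "J \<delta> (xs k) (us k) < Lb \<delta>" using cl_invariant[OF g cl lt, of k] lt by linarith
  have N0: "0 < N" using N_pos by simp
  have d: "0 < \<delta>" using g by (simp add: good_def)
  have "\<delta> < dx $ i - Cx $ i \<bullet> pred A B (xs k) (us k) 0" for i by (rule slack(1)[OF g lt' N0])
  moreover have "\<delta> < du $ j - Cu $ j \<bullet> us k 0" for j by (rule slack(2)[OF g lt' N0])
  ultimately show ?thesis using d unfolding strictly_in_def by (smt (verit) pred.simps(1))
qed

end



lemma half_comb: "(1 - 1/2) *\<^sub>R a + (1/2) *\<^sub>R b = (1/2) *\<^sub>R (a + b)" for a b :: "'a::real_vector"
  by (simp add: scaleR_right_distrib)

lemma qf_mid_le: "psd Q \<Longrightarrow> qf Q ((1/2) *\<^sub>R (a + b)) \<le> (qf Q a + qf Q b) / 2"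
  for Q :: "real^'n::finite^'n"
proof -
  assume a: "psd Q"
  have "transpose Q = Q" using a by (simp add: psd_def)
  from qf_mid[OF this, of a b] qf_nonneg[OF a, of "a - b"] show ?thesis by argo
qed

lemma pd_psd: "pd P \<Longrightarrow> psd P"
  by (auto simp: pd_def psd_def) (metis inner_zero_left matrix_vector_mult_0_right order_refl less_imp_le)

context mpc begin

lemma bx_mid: "good \<delta> \<Longrightarrow> bx \<delta> ((1/2) *\<^sub>R (a + b)) \<le> (bx \<delta> a + bx \<delta> b) / 2"
  using rb_convex[OF rcx_valid dx_pos r_valid, of \<delta> "1/2" a b]
  unfolding relaxed_barrier_def half_comb by (simp add: good_def)

lemma bu_mid: "good \<delta> \<Longrightarrow> bu \<delta> ((1/2) *\<^sub>R (a + b)) \<le> (bu \<delta> a + bu \<delta> b) / 2"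
  using rb_convex[OF rcu_valid du_pos r_valid, of \<delta> "1/2" a b]
  unfolding relaxed_barrier_def half_comb by (simp add: good_def)

lemma Bphi_mid:
  assumes g: "good \<delta>"
  shows "Bhat r \<delta> (1 - \<phi> ((1/2) *\<^sub>R (a + b))) \<le> (Bhat r \<delta> (1 - \<phi> a) + Bhat r \<delta> (1 - \<phi> b)) / 2"
proof -
  have d: "0 < \<delta>" using g by (simp add: good_def)
  have "\<phi> ((1/2) *\<^sub>R (a + b)) \<le> (1 - 1/2) * \<phi> a + (1/2) * \<phi> b"
    using convex_onD[OF phi_convex, of "1/2" a b] unfolding half_comb by simp
  hence "(1 - 1/2) * (1 - \<phi> a) + (1/2) * (1 - \<phi> b) \<le> 1 - \<phi> ((1/2) *\<^sub>R (a + b))" by argo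
  hence "Bhat r \<delta> (1 - \<phi> ((1/2) *\<^sub>R (a + b))) \<le> Bhat r \<delta> ((1 - 1/2) * (1 - \<phi> a) + (1/2) * (1 - \<phi> b))"
    by (rule Bhat_antimono[OF r_valid d])
  also have "\<dots> \<le> (1 - 1/2) * Bhat r \<delta> (1 - \<phi> a) + (1/2) * Bhat r \<delta> (1 - \<phi> b)"
    by (rule Bhat_convex[OF r_valid d]) auto
  finally show ?thesis by simp
qed

lemma ellh_mid:
  assumes g: "good \<delta>"
  shows "ellh \<delta> ((1/2) *\<^sub>R (p + q)) ((1/2) *\<^sub>R (a + b))
     \<le> (ellh \<delta> p a + ellh \<delta> q b) / 2 - qf R (a - b) / 4"
proof -
  have 1: "qf Q ((1/2) *\<^sub>R (p + q)) \<le> (qf Q p + qf Q q) / 2" by (rule qf_mid_le[OF Q_psd])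
  have 2: "qf R ((1/2) *\<^sub>R (a + b)) = (qf R a + qf R b) / 2 - qf R (a - b) / 4"
    using R_pd by (intro qf_mid) (simp add: pd_def)
  have 3: "\<epsilon> * bu \<delta> ((1/2) *\<^sub>R (a + b)) \<le> (\<epsilon> * bu \<delta> a + \<epsilon> * bu \<delta> b) / 2"
    using mult_left_mono[OF bu_mid[OF g, of a b], of \<epsilon>] eps_pos by (simp add: field_simps)
  have 4: "\<epsilon> * bx \<delta> ((1/2) *\<^sub>R (p + q)) \<le> (\<epsilon> * bx \<delta> p + \<epsilon> * bx \<delta> q) / 2"
    using mult_left_mono[OF bx_mid[OF g, of p q], of \<epsilon>] eps_pos by (simp add: field_simps)
  show ?thesis using 1 2 3 4 unfolding ellh_def by argo
qed

lemma Fh_mid: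
  assumes g: "good \<delta>"
  shows "Fh \<delta> ((1/2) *\<^sub>R (p + q)) \<le> (Fh \<delta> p + Fh \<delta> q) / 2"
proof -
  have 1: "qf P ((1/2) *\<^sub>R (p + q)) \<le> (qf P p + qf P q) / 2" by (rule qf_mid_le[OF pd_psd[OF P_pd]])
  have 2: "\<epsilon> * Bhat r \<delta> (1 - \<phi> ((1/2) *\<^sub>R (p + q))) \<le> (\<epsilon> * Bhat r \<delta> (1 - \<phi> p) + \<epsilon> * Bhat r \<delta> (1 - \<phi> q)) / 2"
    using mult_left_mono[OF Bphi_mid[OF g, of p q], of \<epsilon>] eps_pos by (simp add: field_simps)
  show ?thesis using 1 2 unfolding Fh_def by argo
qed

lemma J_mid:
  assumes g: "good \<delta>"
  shows "J \<delta> x (\<lambda>k. (1/2) *\<^sub>R (u k + v k)) \<le> (J \<delta> x u + J \<delta> x v) / 2 - (\<Sum>k<N. qf R (u k - v k)) / 4"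
proof -
  let ?m = "\<lambda>k. (1/2) *\<^sub>R (u k + v k)"
  have "(\<Sum>k<N. ellh \<delta> (pred A B x ?m k) (?m k))
      \<le> (\<Sum>k<N. (ellh \<delta> (pred A B x u k) (u k) + ellh \<delta> (pred A B x v k) (v k)) / 2 - qf R (u k - v k) / 4)"
    by (rule sum_mono) (simp add: pred_mid ellh_mid[OF g])
  also have "\<dots> = ((\<Sum>k<N. ellh \<delta> (pred A B x u k) (u k)) + (\<Sum>k<N. ellh \<delta> (pred A B x v k) (v k))) / 2
       - (\<Sum>k<N. qf R (u k - v k)) / 4"
    by (simp only: sum_subtractf sum.distrib sum_divide_distrib[symmetric] add_divide_distrib)
  finally have s: "(\<Sum>k<N. ellh \<delta> (pred A B x ?m k) (?m k)) \<le> \<dots>" .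
  have f: "Fh \<delta> (pred A B x ?m N) \<le> (Fh \<delta> (pred A B x u N) + Fh \<delta> (pred A B x v N)) / 2"
    unfolding pred_mid by (rule Fh_mid[OF g])
  show ?thesis unfolding cost_split using s f by argo
qed

lemma strong_convex:
  assumes g: "good \<delta>" and opt: "\<And>w. J \<delta> x u \<le> J \<delta> x w"
  shows "J \<delta> x u + (\<Sum>k<N. qf R (u k - v k)) / 2 \<le> J \<delta> x v"
  using J_mid[OF g, of x u v] opt[of "\<lambda>k. (1/2) *\<^sub>R (u k + v k)"] by argo

end



lemma le_sqrt_from_sq: "0 < l \<Longrightarrow> l * t ^ 2 \<le> V \<Longrightarrow> t \<le> sqrt (V / l)" for l t V :: real
  by (rule real_le_rsqrt) (simp add: pos_le_divide_eq mult.commute)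

context mpc begin

lemma J_nonneg: "good \<delta> \<Longrightarrow> 0 \<le> J \<delta> x u"
  using Fh_le_J[of \<delta> x u] Fh_nonneg[of \<delta>] by (meson order_trans)

lemma cl_facts:
  assumes cl: "closed_loop A B (J \<delta>) xs us"
  shows "\<And>k w. J \<delta> (xs k) (us k) \<le> J \<delta> (xs k) w" "\<And>k. xs (Suc k) = A *v xs k + B *v us k 0"
  using cl unfolding closed_loop_def by blast+

lemma cl_shift_bound:
  assumes g: "good \<delta>" and cl: "closed_loop A B (J \<delta>) xs us" and lt: "J \<delta> (xs 0) (us 0) < Lb \<delta>"
  shows "J \<delta> (xs (Suc k)) (shiftu (xs k) (us k)) \<le> J \<delta> (xs k) (us k) - ellh \<delta> (xs k) (us k 0)"
proof -
  have lt': "J \<delta> (xs k) (us k) < Lb \<delta>" using cl_invariant[OF g cl lt, of k] lt by linarith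
  have "\<delta> < 1 - \<phi> (pred A B (xs k) (us k) N)" by (rule slack(3)[OF g lt'])
  hence y: "\<phi> (pred A B (xs k) (us k) N) \<le> 1" using g by (auto simp: good_def)
  show ?thesis unfolding cl_facts(2)[OF cl] by (rule shift_decrease[OF g y])
qed

lemma us_bound:
  assumes g: "good \<delta>" and cl: "closed_loop A B (J \<delta>) xs us" and lt: "J \<delta> (xs 0) (us 0) < Lb \<delta>"
    and l: "0 < l" "\<And>x. l * norm x ^ 2 \<le> qf R x" and j: "j < N"
  shows "norm (us k j) \<le> sqrt (J \<delta> (xs 0) (us 0) / l)"
proof -
  have "l * norm (us k j) ^ 2 \<le> J \<delta> (xs 0) (us 0)"
    using l(2)[of "us k j"] comps_le_J(3)[OF g j, where x="xs k" and u="us k"] cl_invariant[OF g cl lt, of k]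
    by linarith
  thus ?thesis by (rule le_sqrt_from_sq[OF l(1)])
qed

lemma y_bound:
  assumes g: "good \<delta>" and cl: "closed_loop A B (J \<delta>) xs us" and lt: "J \<delta> (xs 0) (us 0) < Lb \<delta>"
    and l: "0 < l" "\<And>x. l * norm x ^ 2 \<le> qf P x"
  shows "norm (pred A B (xs k) (us k) N) \<le> sqrt (J \<delta> (xs 0) (us 0) / l)"
proof -
  have N0: "0 < N" using N_pos by simp
  have "l * norm (pred A B (xs k) (us k) N) ^ 2 \<le> J \<delta> (xs 0) (us 0)"
    using l(2)[of "pred A B (xs k) (us k) N"] comps_le_J(4)[OF g N0, where x="xs k" and u="us k"]
      cl_invariant[OF g cl lt, of k]
    by linarith
  thus ?thesis by (rule le_sqrt_from_sq[OF l(1)])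
qed

lemma stab_bound:
  assumes g: "good \<delta>" and cl: "closed_loop A B (J \<delta>) xs us" and lt: "J \<delta> (xs 0) (us 0) < Lb \<delta>"
    and l: "0 < l" "\<And>x. l * norm x ^ 2 \<le> qf R x" "\<And>x. l * norm x ^ 2 \<le> qf P x"
    and c: "0 \<le> c" "\<And>x u k. k \<le> N \<Longrightarrow> norm (pred A B x u k) \<le> c * (norm x + (\<Sum>j<N. norm (u j)))"
  shows "norm (xs k) \<le> c * norm (xs 0) + (1 + 3 * c * real N) * sqrt (J \<delta> (xs 0) (us 0) / l)"
proof -
  define a where "a = sqrt (J \<delta> (xs 0) (us 0) / l)"
  have a0: "0 \<le> a" unfolding a_def using J_nonneg[OF g] l by simp
  have ub: "norm (us k' j) \<le> a" if "j < N" for k' j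
    unfolding a_def by (rule us_bound[OF g cl lt l(1,2) that])
  have yb: "norm (pred A B (xs k') (us k') N) \<le> a" for k'
    unfolding a_def by (rule y_bound[OF g cl lt l(1,3)])
  have sumb: "(\<Sum>j<N. norm (f j)) \<le> real N * a" if "\<And>j. j < N \<Longrightarrow> norm (f j) \<le> a" for f :: "nat \<Rightarrow> real^'m"
  proof -
    have "(\<Sum>j<N. norm (f j)) \<le> (\<Sum>j<N. a)" by (rule sum_mono) (use that in auto)
    thus ?thesis by simp
  qed
  show ?thesis
  proof (cases "k < N")
    case True
    have "xs k = pred A B (xs 0) (\<lambda>i. us (0 + i) 0) k" using closed_pred[where xs=xs and us=us and A=A and B=B, OF cl_facts(2)[OF cl], of 0 k] by simp
    hence "norm (xs k) \<le> c * (norm (xs 0) + (\<Sum>j<N. norm (us (0 + j) 0)))" using c(2)[of k] True by simp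
    also have "\<dots> \<le> c * (norm (xs 0) + real N * a)"
      using sumb[of "\<lambda>j. us (0 + j) 0"] ub c(1) N_pos by (intro mult_left_mono add_left_mono) auto
    also have "\<dots> \<le> c * norm (xs 0) + (1 + 3 * c * real N) * a"
      using a0 c(1) by (simp add: algebra_simps)
    finally show ?thesis unfolding a_def .
  next
    case False
    define k' where "k' = k - N"
    have kk: "k = k' + N" using False by (simp add: k'_def)
    have "xs k = pred A B (xs k') (\<lambda>i. us (k' + i) 0) N" using closed_pred[where xs=xs and us=us and A=A and B=B, OF cl_facts(2)[OF cl], of k' N] kk by simp
    hence "xs k = pred A B (xs k') (us k') N + (pred A B (xs k') (\<lambda>i. us (k' + i) 0) N - pred A B (xs k') (us k') N)"
      by simp
    also have "\<dots> = pred A B (xs k') (us k') N + pred A B 0 (\<lambda>j. us (k' + j) 0 - us k' j) N"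
      by (simp only: pred_diff)
    finally have xk: "xs k = pred A B (xs k') (us k') N + pred A B 0 (\<lambda>j. us (k' + j) 0 - us k' j) N" .
    have "norm (pred A B 0 (\<lambda>j. us (k' + j) 0 - us k' j) N) \<le> c * (norm (0::real^'n) + (\<Sum>j<N. norm (us (k' + j) 0 - us k' j)))"
      by (rule c(2)) simp
    also have "\<dots> \<le> c * (2 * real N * a)"
    proof -
      have "(\<Sum>j<N. norm (us (k' + j) 0 - us k' j)) \<le> (\<Sum>j<N. 2 * a)"
      proof (rule sum_mono)
        fix j assume "j \<in> {..<N}"
        hence j: "j < N" by simp
        have "norm (us (k' + j) 0 - us k' j) \<le> norm (us (k' + j) 0) + norm (us k' j)" by (rule norm_triangle_ineq4)
        also have "\<dots> \<le> 2 * a" using ub[of 0 "k' + j"] ub[OF j, of k'] N_pos by simp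
        finally show "norm (us (k' + j) 0 - us k' j) \<le> 2 * a" .
      qed
      thus ?thesis using c(1) by (intro mult_left_mono) auto
    qed
    finally have d: "norm (pred A B 0 (\<lambda>j. us (k' + j) 0 - us k' j) N) \<le> c * (2 * real N * a)" .
    have "norm (xs k) \<le> a + c * (2 * real N * a)"
      unfolding xk using norm_triangle_ineq[of "pred A B (xs k') (us k') N" "pred A B 0 (\<lambda>j. us (k' + j) 0 - us k' j) N"]
        yb[of k'] d by linarith
    also have "\<dots> \<le> c * norm (xs 0) + (1 + 3 * c * real N) * a"
      using a0 c(1) by (simp add: algebra_simps mult_nonneg_nonneg)
    finally show ?thesis unfolding a_def .
  qed
qed

lemma feedback_phi: "\<phi> x \<le> 1 \<Longrightarrow> \<phi> ((((*v) AK) ^^ k) x) \<le> \<phi> x"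
proof (induction k)
  case 0 show ?case by simp
next
  case (Suc k)
  hence "\<phi> ((((*v) AK) ^^ k) x) \<le> 1" by linarith
  hence "\<phi> (AK *v (((*v) AK) ^^ k) x) \<le> \<phi> ((((*v) AK) ^^ k) x)" using phi_dec by blast
  thus ?case using Suc by simp
qed

lemma feedback_tele:
  assumes g: "good \<delta>" and x: "\<phi> x \<le> 1"
  shows "(\<Sum>k<n. ellh \<delta> ((((*v) AK) ^^ k) x) (K *v ((((*v) AK) ^^ k) x))) + Fh \<delta> ((((*v) AK) ^^ n) x) \<le> Fh \<delta> x"
proof (induction n)
  case 0 show ?case by simp
next
  case (Suc n)
  have p: "\<phi> ((((*v) AK) ^^ n) x) \<le> 1" using feedback_phi[OF x, of n] x by linarith
  have "Fh \<delta> (AK *v ((((*v) AK) ^^ n) x)) + ellh \<delta> ((((*v) AK) ^^ n) x) (K *v ((((*v) AK) ^^ n) x))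
      \<le> Fh \<delta> ((((*v) AK) ^^ n) x)"
    by (rule terminal_decrease[OF g p])
  thus ?case using Suc by simp
qed

lemma feedback_cost:
  assumes g: "good \<delta>" and x: "\<phi> x \<le> 1"
  shows "J \<delta> x (\<lambda>j. K *v ((((*v) AK) ^^ j) x)) \<le> Fh \<delta> x"
  unfolding cost_split pred_feedback using feedback_tele[OF g x, of N] by simp

end



context mpc begin

lemma converge:
  assumes g: "good \<delta>" and cl: "closed_loop A B (J \<delta>) xs us" and lt: "J \<delta> (xs 0) (us 0) < Lb \<delta>"
    and l: "0 < l" "\<And>x. l * norm x ^ 2 \<le> qf R x" "\<And>x. l * norm x ^ 2 \<le> qf P x"
    and c: "0 \<le> c" "\<And>x u k. k \<le> N \<Longrightarrow> norm (pred A B x u k) \<le> c * (norm x + (\<Sum>j<N. norm (u j)))"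
    and dec: "\<And>k x. norm ((((*v) AK) ^^ k) x) \<le> c0 * \<rho>^k * norm x" and rho: "0 < \<rho>" "\<rho> < 1"
  shows "xs \<longlonglongrightarrow> 0"
proof -
  define V where "V k = J \<delta> (xs k) (us k)" for k
  define w where "w k = shiftu (xs k) (us k)" for k
  define D where "D k = (\<Sum>j<N. norm (us (Suc k) j - w k j))" for k
  define y where "y k = pred A B (xs k) (us k) N" for k
  have Vdec: "V (Suc k) \<le> V k" for k
    using cl_step[OF g cl, of k] cl_invariant[OF g cl lt, of k] lt ellh_nonneg[OF g, of "xs k" "us k 0"]
    unfolding V_def by linarith
  have V0: "0 \<le> V k" for k unfolding V_def by (rule J_nonneg[OF g])
  obtain L where L: "V \<longlonglongrightarrow> L"
    using decseq_convergent[of V 0] Vdec V0 by (metis decseq_Suc_iff)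
  have Vdiff: "(\<lambda>k. V k - V (Suc k)) \<longlonglongrightarrow> 0"
    using tendsto_diff[OF L LIMSEQ_Suc[OF L]] by simp
  \<comment> \<open>strong convexity gives D \<to> 0\<close>
  have Db: "D k \<le> real N * sqrt (2 * (V k - V (Suc k)) / l)" for k
  proof -
    have opt: "\<And>v. J \<delta> (xs (Suc k)) (us (Suc k)) \<le> J \<delta> (xs (Suc k)) v" by (rule cl_facts(1)[OF cl])
    have sc: "V (Suc k) + (\<Sum>j<N. qf R (us (Suc k) j - w k j)) / 2 \<le> J \<delta> (xs (Suc k)) (w k)"
      unfolding V_def by (rule strong_convex[OF g opt])
    have sb: "J \<delta> (xs (Suc k)) (w k) \<le> V k"
      using cl_shift_bound[OF g cl lt, of k] ellh_nonneg[OF g, of "xs k" "us k 0"]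
      unfolding w_def V_def by linarith
    have tb: "norm (us (Suc k) j - w k j) \<le> sqrt (2 * (V k - V (Suc k)) / l)" if j: "j < N" for j
    proof -
      have "qf R (us (Suc k) j - w k j) \<le> (\<Sum>j<N. qf R (us (Suc k) j - w k j))"
        by (rule member_le_sum) (use j pd_nonneg[OF R_pd] in auto)
      hence "l * norm (us (Suc k) j - w k j) ^ 2 \<le> 2 * (V k - V (Suc k))"
        using l(2)[of "us (Suc k) j - w k j"] sc sb by argo
      thus ?thesis by (rule le_sqrt_from_sq[OF l(1)])
    qed
    have "D k \<le> (\<Sum>j<N. sqrt (2 * (V k - V (Suc k)) / l))"
      unfolding D_def by (rule sum_mono) (use tb in auto)
    thus ?thesis by simp
  qed
  have Dnn: "0 \<le> D k" for k unfolding D_def by (simp add: sum_nonneg)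
  have D0: "D \<longlonglongrightarrow> 0"
  proof (rule Lim_null_comparison)
    show "\<forall>\<^sub>F k in sequentially. norm (D k) \<le> real N * sqrt (2 * (V k - V (Suc k)) / l)"
      using Db Dnn by simp
    have "(\<lambda>k. real N * sqrt (2 * (V k - V (Suc k)) / l)) \<longlonglongrightarrow> real N * sqrt (2 * 0 / l)"
      using l(1) by (intro tendsto_intros Vdiff) auto
    thus "(\<lambda>k. real N * sqrt (2 * (V k - V (Suc k)) / l)) \<longlonglongrightarrow> 0" by simp
  qed
  \<comment> \<open>predicted terminal states\<close>
  define e where "e k = y (Suc k) - AK *v y k" for k
  have yrec: "y (Suc k) = AK *v y k + e k" for k unfolding e_def by simp
  have ediff: "e k = pred A B 0 (\<lambda>j. us (Suc k) j - w k j) N" for k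
  proof -
    have "AK *v y k = pred A B (xs (Suc k)) (w k) N"
      unfolding y_def w_def cl_facts(2)[OF cl] by (rule shift_pred_N[symmetric])
    thus ?thesis unfolding e_def y_def by (simp add: pred_diff)
  qed
  have e0: "e \<longlonglongrightarrow> 0"
  proof (rule Lim_null_comparison)
    show "\<forall>\<^sub>F k in sequentially. norm (e k) \<le> c * D k"
      using c(2)[of N 0] unfolding ediff D_def by simp
    show "(\<lambda>k. c * D k) \<longlonglongrightarrow> 0" using tendsto_mult[OF tendsto_const D0, of c] by simp
  qed
  have ybd: "norm (y k) \<le> sqrt (J \<delta> (xs 0) (us 0) / l)" for k
    unfolding y_def by (rule y_bound[OF g cl lt l(1,3)])
  have y0: "y \<longlonglongrightarrow> 0" by (rule perturbed_stable[OF dec rho ybd yrec e0])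
  \<comment> \<open>closed loop versus prediction\<close>
  have chain: "norm (us (k + j) 0 - us k j) \<le> (\<Sum>i<j. D (k + i))" if "j < N" for j k
    using that
  proof (induction j arbitrary: k)
    case 0 show ?case by simp
  next
    case (Suc j)
    have j: "j < N" "Suc j < N" using Suc.prems by auto
    have wk: "w k j = us k (Suc j)" unfolding w_def using shiftu_lt[OF j(2)] .
    have "us (k + Suc j) 0 - us k (Suc j) = (us (Suc k + j) 0 - us (Suc k) j) + (us (Suc k) j - w k j)"
      by (simp add: wk)
    hence "norm (us (k + Suc j) 0 - us k (Suc j)) \<le> norm (us (Suc k + j) 0 - us (Suc k) j) + norm (us (Suc k) j - w k j)"
      by (metis norm_triangle_ineq)
    also have "norm (us (Suc k + j) 0 - us (Suc k) j) \<le> (\<Sum>i<j. D (Suc k + i))" by (rule Suc.IH[OF j(1)])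
    also have "norm (us (Suc k) j - w k j) \<le> D k"
      unfolding D_def by (rule member_le_sum) (use j in auto)
    also have "(\<Sum>i<j. D (Suc k + i)) + D k = (\<Sum>i<Suc j. D (k + i))"
      by (subst sum.lessThan_Suc_shift) simp
    finally show ?case by simp
  qed
  define z where "z k = xs (k + N) - y k" for k
  have zeq: "z k = pred A B 0 (\<lambda>j. us (k + j) 0 - us k j) N" for k
  proof -
    have "xs (k + N) = pred A B (xs k) (\<lambda>i. us (k + i) 0) N"
      by (rule closed_pred[where xs=xs and us=us and A=A and B=B, OF cl_facts(2)[OF cl]])
    thus ?thesis unfolding z_def y_def by (simp add: pred_diff)
  qed
  have z0: "z \<longlonglongrightarrow> 0"
  proof (rule Lim_null_comparison)
    show "\<forall>\<^sub>F k in sequentially. norm (z k) \<le> c * (\<Sum>j<N. \<Sum>i<j. D (k + i))"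
    proof (rule always_eventually, rule allI)
      fix k
      have "norm (z k) \<le> c * (norm (0::real^'n) + (\<Sum>j<N. norm (us (k + j) 0 - us k j)))"
        unfolding zeq by (rule c(2)) simp
      also have "\<dots> \<le> c * (\<Sum>j<N. \<Sum>i<j. D (k + i))"
        using c(1) chain by (intro mult_left_mono) (auto intro!: sum_mono)
      finally show "norm (z k) \<le> c * (\<Sum>j<N. \<Sum>i<j. D (k + i))" .
    qed
    have "(\<lambda>k. c * (\<Sum>j<N. \<Sum>i<j. D (k + i))) \<longlonglongrightarrow> c * (\<Sum>j<N. \<Sum>i<j. 0)"
      by (intro tendsto_intros LIMSEQ_ignore_initial_segment[OF D0, simplified add.commute] )
    thus "(\<lambda>k. c * (\<Sum>j<N. \<Sum>i<j. D (k + i))) \<longlonglongrightarrow> 0" by simp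
  qed
  have "(\<lambda>k. xs (k + N)) \<longlonglongrightarrow> 0"
  proof -
    have "(\<lambda>k. z k + y k) \<longlonglongrightarrow> 0 + 0" by (intro tendsto_add z0 y0)
    moreover have "z k + y k = xs (k + N)" for k by (simp add: z_def)
    ultimately show ?thesis by simp
  qed
  thus ?thesis by (rule LIMSEQ_offset)
qed

end



lemma rb_log_bound:
  fixes C :: "real^'n::finite^'p::finite"
  assumes vr: "valid_recenter C d rc" and dpos: "\<forall>i. 0 < d $ i" and m: "0 < m"
    and sl: "\<forall>i. m \<le> d $ i - C $ i \<bullet> x" and R: "norm x \<le> R"
  shows "rbarrier (\<lambda>z. - ln z) C d rc x \<le> (\<Sum>i\<in>UNIV. rcoef rc i * (\<bar>ln m\<bar> + \<bar>ln (d $ i)\<bar> + 1 + norm (C $ i) * R / d $ i))"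
proof -
  have t: "gterm (\<lambda>z. - ln z) (d $ i) (d $ i - C $ i \<bullet> x) \<le> \<bar>ln m\<bar> + \<bar>ln (d $ i)\<bar> + 1 + norm (C $ i) * R / d $ i" for i
  proof -
    have di: "0 < d $ i" using dpos by simp
    have z: "m \<le> d $ i - C $ i \<bullet> x" using sl by simp
    have 1: "- ln (d $ i - C $ i \<bullet> x) \<le> \<bar>ln m\<bar>"
    proof -
      have "ln m \<le> ln (d $ i - C $ i \<bullet> x)" using z m by simp
      thus ?thesis by linarith
    qed
    have "- (C $ i \<bullet> x) \<le> norm (C $ i) * R"
    proof -
      have "\<bar>C $ i \<bullet> x\<bar> \<le> norm (C $ i) * norm x" by (rule Cauchy_Schwarz_ineq2)
      also have "\<dots> \<le> norm (C $ i) * R" using R by (intro mult_left_mono) auto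
      finally show ?thesis by linarith
    qed
    hence e2: "(- (C $ i \<bullet> x)) / d $ i \<le> norm (C $ i) * R / d $ i"
      using di by (intro divide_right_mono) auto
    have e1: "(d $ i - C $ i \<bullet> x) / d $ i = 1 + (- (C $ i \<bullet> x)) / d $ i"
      using di by (simp add: diff_divide_distrib)
    have "(d $ i - C $ i \<bullet> x) / d $ i \<le> 1 + norm (C $ i) * R / d $ i"
      unfolding e1 using e2 by simp
    thus ?thesis using 1 unfolding gterm_def by linarith
  qed
  have "rbarrier (\<lambda>z. - ln z) C d rc x = (\<Sum>i\<in>UNIV. rcoef rc i * gterm (\<lambda>z. - ln z) (d $ i) (d $ i - C $ i \<bullet> x))"
    by (rule rbarrier_repr[OF vr dpos])
  also have "\<dots> \<le> (\<Sum>i\<in>UNIV. rcoef rc i * (\<bar>ln m\<bar> + \<bar>ln (d $ i)\<bar> + 1 + norm (C $ i) * R / d $ i))"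
    by (rule sum_mono, rule mult_left_mono[OF t]) (use coef_ge1[OF vr] in \<open>auto intro: order.trans[OF zero_le_one]\<close>)
  finally show ?thesis .
qed

context mpc begin

lemma X0_bound:
  assumes X0: "compact X0" "X0 \<subseteq> interior (feasible_set A B (polytope_set Cx dx) (polytope_set Cu du) {x. \<phi> x \<le> 1} N)"
    and Uc: "compact (polytope_set Cu du)"
  shows "\<exists>C m. 0 < m \<and> (\<forall>\<delta>. good \<delta> \<and> \<delta> < m \<longrightarrow> (\<forall>x\<in>X0. \<exists>u. J \<delta> x u \<le> C))"
proof (cases "X0 = {}")
  case True thus ?thesis by (intro exI[of _ 0] exI[of _ 1]) auto
next
  case False
  let ?F = "feasible_set A B (polytope_set Cx dx) (polytope_set Cu du) {x. \<phi> x \<le> 1} N"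
  let ?S = "interior ?F"
  obtain dd where dd: "dd > 0" "\<And>x y. x \<in> X0 \<Longrightarrow> y \<in> - ?S \<Longrightarrow> dd \<le> dist x y"
  proof -
    have "closed (- ?S)" by (rule closed_Compl[OF open_interior])
    moreover have "X0 \<inter> - ?S = {}" using X0(2) by blast
    ultimately show ?thesis using separate_compact_closed[OF X0(1), of "- ?S"] that by blast
  qed
  obtain Rx where Rx: "Rx > 0" "\<And>x. x \<in> X0 \<Longrightarrow> norm x \<le> Rx"
    using compact_imp_bounded[OF X0(1)] unfolding bounded_pos by auto
  obtain Ru where Ru: "Ru > 0" "\<And>v. v \<in> polytope_set Cu du \<Longrightarrow> norm v \<le> Ru"
    using compact_imp_bounded[OF Uc] unfolding bounded_pos by auto
  define t where "t = dd / (2 * Rx)"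
  have t: "0 < t" using dd Rx by (simp add: t_def)
  define s where "s = 1 / (1 + t)"
  have s: "0 < s" "s < 1" using t by (auto simp: s_def)
  define dmin where "dmin = Min (insert 1 (range (\<lambda>i. dx $ i) \<union> range (\<lambda>j. du $ j)))"
  have dmin: "dmin \<le> 1" "\<And>i. dmin \<le> dx $ i" "\<And>j. dmin \<le> du $ j" "0 < dmin"
  proof -
    show "dmin \<le> 1" "\<And>i. dmin \<le> dx $ i" "\<And>j. dmin \<le> du $ j" unfolding dmin_def by (rule Min_le; simp)+
    have "dmin \<in> insert 1 (range (\<lambda>i. dx $ i) \<union> range (\<lambda>j. du $ j))" unfolding dmin_def by (rule Min_in) auto
    thus "0 < dmin" using dx_pos du_pos by auto
  qed
  define m where "m = (1 - s) * dmin"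
  have m: "0 < m" "m \<le> 1 - s" using s dmin by (auto simp: m_def mult_le_cancel_left1)
  obtain c where c: "0 \<le> c" "\<And>x u k. k \<le> N \<Longrightarrow> norm (pred A B x u k) \<le> c * (norm x + (\<Sum>j<N. norm (u j)))"
    using pred_bound[where A=A and B=B and N=N] by auto
  define Rp where "Rp = c * (Rx + real N * Ru)"
  have Rp: "0 \<le> Rp" using c Rx Ru by (simp add: Rp_def)
  obtain cQ where cQ: "cQ \<ge> 0" "\<And>x. \<bar>qf Q x\<bar> \<le> cQ * norm x ^ 2" using qf_bound[of Q] by auto
  obtain cR where cR: "cR \<ge> 0" "\<And>x. \<bar>qf R x\<bar> \<le> cR * norm x ^ 2" using qf_bound[of R] by auto
  obtain cP where cP: "cP \<ge> 0" "\<And>x. \<bar>qf P x\<bar> \<le> cP * norm x ^ 2" using qf_bound[of P] by auto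
  define BX where "BX = (\<Sum>i\<in>UNIV. rcoef rcx i * (\<bar>ln m\<bar> + \<bar>ln (dx $ i)\<bar> + 1 + norm (Cx $ i) * Rp / dx $ i))"
  define BU where "BU = (\<Sum>i\<in>UNIV. rcoef rcu i * (\<bar>ln m\<bar> + \<bar>ln (du $ i)\<bar> + 1 + norm (Cu $ i) * Ru / du $ i))"
  define CC where "CC = real N * (cQ * Rp^2 + cR * Ru^2 + \<epsilon> * BU + \<epsilon> * BX) + cP * Rp^2 + \<epsilon> * \<bar>ln m\<bar>"
  have main: "\<exists>u. J \<delta> x u \<le> CC" if g: "good \<delta>" and dm: "\<delta> < m" and x: "x \<in> X0" for \<delta> x
  proof -
    have "(1 + t) *\<^sub>R x \<in> ?F"
    proof -
      have "dist x ((1 + t) *\<^sub>R x) = t * norm x" using t by (simp add: dist_norm algebra_simps)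
      also have "\<dots> \<le> t * Rx" using Rx(2)[OF x] t by simp
      also have "\<dots> < dd" using dd Rx by (simp add: t_def)
      finally have "(1 + t) *\<^sub>R x \<in> ?S" using dd(2)[OF x, of "(1 + t) *\<^sub>R x"] by force
      thus ?thesis using interior_subset by blast
    qed
    then obtain u' where u': "\<And>k. k < N \<Longrightarrow> u' k \<in> polytope_set Cu du"
        "\<And>k. k < N \<Longrightarrow> pred A B ((1 + t) *\<^sub>R x) u' k \<in> polytope_set Cx dx"
        "\<phi> (pred A B ((1 + t) *\<^sub>R x) u' N) \<le> 1"
      unfolding feasible_set_def by blast
    define u where "u k = s *\<^sub>R u' k" for k
    have px: "pred A B x u k = s *\<^sub>R pred A B ((1 + t) *\<^sub>R x) u' k" for k
    proof -
      have "pred A B (s *\<^sub>R ((1 + t) *\<^sub>R x) + 0 *\<^sub>R x) (\<lambda>j. s *\<^sub>R u' j + 0 *\<^sub>R u' j) k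
          = s *\<^sub>R pred A B ((1 + t) *\<^sub>R x) u' k + 0 *\<^sub>R pred A B x u' k" by (rule pred_lin)
      moreover have "s *\<^sub>R ((1 + t) *\<^sub>R x) = x" using t by (simp add: s_def)
      moreover have "u = (\<lambda>j. s *\<^sub>R u' j)" by (simp add: u_def fun_eq_iff)
      ultimately show ?thesis by simp
    qed
    have unorm: "norm (u k) \<le> Ru" if "k < N" for k
    proof -
      have "norm (u k) = s * norm (u' k)" using s by (simp add: u_def)
      also have "\<dots> \<le> 1 * Ru" using Ru(2)[OF u'(1)[OF that]] s by (intro mult_mono) auto
      finally show ?thesis by simp
    qed
    have pnorm: "norm (pred A B x u k) \<le> Rp" if "k \<le> N" for k
    proof -
      have "norm (pred A B x u k) \<le> c * (norm x + (\<Sum>j<N. norm (u j)))" by (rule c(2)[OF that])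
      also have "\<dots> \<le> c * (Rx + real N * Ru)"
      proof -
        have "(\<Sum>j<N. norm (u j)) \<le> (\<Sum>j<N. Ru)" by (rule sum_mono) (use unorm in auto)
        thus ?thesis using Rx(2)[OF x] c(1) by (intro mult_left_mono) auto
      qed
      finally show ?thesis by (simp add: Rp_def)
    qed
    have slx: "m \<le> dx $ i - Cx $ i \<bullet> pred A B x u k" if "k < N" for k i
    proof -
      have "Cx $ i \<bullet> pred A B ((1 + t) *\<^sub>R x) u' k \<le> dx $ i"
        using u'(2)[OF that] by (simp add: polytope_set_def)
      hence "s * (Cx $ i \<bullet> pred A B ((1 + t) *\<^sub>R x) u' k) \<le> s * dx $ i" using s by simp
      moreover have "(1 - s) * dmin \<le> (1 - s) * dx $ i" using s dmin(2) by (intro mult_left_mono) auto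
      ultimately show ?thesis by (simp add: px m_def algebra_simps)
    qed
    have slu: "m \<le> du $ j - Cu $ j \<bullet> u k" if "k < N" for k j
    proof -
      have "Cu $ j \<bullet> u' k \<le> du $ j" using u'(1)[OF that] by (simp add: polytope_set_def)
      hence "s * (Cu $ j \<bullet> u' k) \<le> s * du $ j" using s by simp
      moreover have "(1 - s) * dmin \<le> (1 - s) * du $ j" using s dmin(3) by (intro mult_left_mono) auto
      ultimately show ?thesis by (simp add: u_def m_def algebra_simps)
    qed
    have slf: "m \<le> 1 - \<phi> (pred A B x u N)"
    proof -
      have "\<phi> ((1 - s) *\<^sub>R 0 + s *\<^sub>R pred A B ((1 + t) *\<^sub>R x) u' N) \<le> (1 - s) * \<phi> 0 + s * \<phi> (pred A B ((1 + t) *\<^sub>R x) u' N)"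
        using convex_onD[OF phi_convex, of s 0 "pred A B ((1 + t) *\<^sub>R x) u' N"] s by simp
      hence "\<phi> (pred A B x u N) \<le> s" using phi_0 u'(3) s by (simp add: px) (smt (verit) mult_left_le)
      thus ?thesis using m by simp
    qed
    have bxb: "\<epsilon> * bx \<delta> (pred A B x u k) \<le> \<epsilon> * BX" if "k < N" for k
    proof -
      have "bx \<delta> (pred A B x u k) = log_barrier Cx dx rcx (pred A B x u k)"
        unfolding relaxed_barrier_def log_barrier_def using slx[OF that] dm by (intro rb_eq_log) (smt (verit))
      also have "\<dots> \<le> BX" unfolding log_barrier_def BX_def
        by (rule rb_log_bound[OF rcx_valid dx_pos m(1)]) (use slx[OF that] pnorm[of k] that in auto)
      finally show ?thesis using eps_pos by simp
    qed
    have bub: "\<epsilon> * bu \<delta> (u k) \<le> \<epsilon> * BU" if "k < N" for k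
    proof -
      have "bu \<delta> (u k) = log_barrier Cu du rcu (u k)"
        unfolding relaxed_barrier_def log_barrier_def using slu[OF that] dm by (intro rb_eq_log) (smt (verit))
      also have "\<dots> \<le> BU" unfolding log_barrier_def BU_def
        by (rule rb_log_bound[OF rcu_valid du_pos m(1)]) (use slu[OF that] unorm[OF that] in auto)
      finally show ?thesis using eps_pos by simp
    qed
    have qfb: "cQ * norm (pred A B x u k) ^ 2 \<le> cQ * Rp ^ 2" "cP * norm (pred A B x u k) ^ 2 \<le> cP * Rp ^ 2"
      if "k \<le> N" for k
      using pnorm[OF that] cQ(1) cP(1) by (auto intro!: mult_left_mono power_mono)
    have qrb: "cR * norm (u k) ^ 2 \<le> cR * Ru ^ 2" if "k < N" for k
      using unorm[OF that] cR(1) by (auto intro!: mult_left_mono power_mono)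
    have eb: "ellh \<delta> (pred A B x u k) (u k) \<le> cQ * Rp^2 + cR * Ru^2 + \<epsilon> * BU + \<epsilon> * BX" if "k < N" for k
      using cQ(2)[of "pred A B x u k"] cR(2)[of "u k"] qfb(1)[OF less_imp_le[OF that]] qrb[OF that] bxb[OF that] bub[OF that] that
      unfolding ellh_def by (smt (verit))
    have fb: "Fh \<delta> (pred A B x u N) \<le> cP * Rp^2 + \<epsilon> * \<bar>ln m\<bar>"
    proof -
      have "Bhat r \<delta> (1 - \<phi> (pred A B x u N)) = - ln (1 - \<phi> (pred A B x u N))"
        using slf dm by (intro Bhat_gt) linarith
      also have "\<dots> \<le> \<bar>ln m\<bar>"
      proof -
        have "ln m \<le> ln (1 - \<phi> (pred A B x u N))" using slf m by simp
        thus ?thesis by linarith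
      qed
      finally have "\<epsilon> * Bhat r \<delta> (1 - \<phi> (pred A B x u N)) \<le> \<epsilon> * \<bar>ln m\<bar>" using eps_pos by simp
      thus ?thesis using cP(2)[of "pred A B x u N"] qfb(2)[OF order_refl] unfolding Fh_def by (smt (verit))
    qed
    have "(\<Sum>k<N. ellh \<delta> (pred A B x u k) (u k)) \<le> (\<Sum>k<N. cQ * Rp^2 + cR * Ru^2 + \<epsilon> * BU + \<epsilon> * BX)"
      by (rule sum_mono) (use eb in auto)
    hence "J \<delta> x u \<le> CC" unfolding cost_split CC_def using fb by simp
    thus ?thesis by blast
  qed
  show ?thesis using main m(1) by blast
qed

end



context mpc begin

lemma NN_ne: "0 \<in> NN" using Xf_sub phi_0 by auto

lemma good_ex: "\<exists>g0>0. \<forall>\<delta>. 0 < \<delta> \<and> \<delta> \<le> g0 \<longrightarrow> good \<delta>"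
proof -
  have sx: "\<exists>m>0. \<forall>m'. 0 < m' \<and> m' \<le> m \<longrightarrow> (\<forall>x\<in>NN. m' < dx $ i - Cx $ i \<bullet> x)" for i
  proof -
    have cont: "continuous_on NN (\<lambda>x. dx $ i - Cx $ i \<bullet> x)" by (intro continuous_intros)
    obtain x0 where x0: "x0 \<in> NN" "\<And>y. y \<in> NN \<Longrightarrow> dx $ i - Cx $ i \<bullet> x0 \<le> dx $ i - Cx $ i \<bullet> y"
      using continuous_attains_inf[OF NN_compact _ cont] NN_ne by blast
    have "0 < dx $ i - Cx $ i \<bullet> x0" using NN_bound x0(1) by (auto simp: strictly_in_def)
    thus ?thesis using x0(2)
      by (intro exI[of _ "(dx $ i - Cx $ i \<bullet> x0) / 2"]) (auto intro: less_le_trans[of _ "dx $ i - Cx $ i \<bullet> x0"])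
  qed
  have su: "\<exists>m>0. \<forall>m'. 0 < m' \<and> m' \<le> m \<longrightarrow> (\<forall>x\<in>NN. m' < du $ j - Cu $ j \<bullet> (K *v x))" for j
  proof -
    have cl: "continuous_on NN ((*v) K)" by (rule linear_continuous_on[OF matrix_vector_mul_bounded_linear])
    have cont: "continuous_on NN (\<lambda>x. du $ j - Cu $ j \<bullet> (K *v x))"
      by (intro continuous_intros continuous_on_inner continuous_on_compose2[OF _ cl, of UNIV]) auto
    obtain x0 where x0: "x0 \<in> NN" "\<And>y. y \<in> NN \<Longrightarrow> du $ j - Cu $ j \<bullet> (K *v x0) \<le> du $ j - Cu $ j \<bullet> (K *v y)"
      using continuous_attains_inf[OF NN_compact _ cont] NN_ne by blast
    have "0 < du $ j - Cu $ j \<bullet> (K *v x0)" using NN_bound x0(1) by (auto simp: strictly_in_def)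
    thus ?thesis using x0(2)
      by (intro exI[of _ "(du $ j - Cu $ j \<bullet> (K *v x0)) / 2"]) (auto intro: less_le_trans[of _ "du $ j - Cu $ j \<bullet> (K *v x0)"])
  qed
  obtain mx where mx: "mx > 0" "\<And>i. \<forall>x\<in>NN. mx < dx $ i - Cx $ i \<bullet> x"
    using finite_uniform_pos[of "\<lambda>i m. \<forall>x\<in>NN. m < dx $ i - Cx $ i \<bullet> x"] sx by blast
  obtain mu where mu: "mu > 0" "\<And>j. \<forall>x\<in>NN. mu < du $ j - Cu $ j \<bullet> (K *v x)"
    using finite_uniform_pos[of "\<lambda>j m. \<forall>x\<in>NN. m < du $ j - Cu $ j \<bullet> (K *v x)"] su by blast
  define dmin where "dmin = Min (insert 1 (range (\<lambda>i. dx $ i) \<union> range (\<lambda>j. du $ j)))"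
  have dmin: "\<And>i. dmin \<le> dx $ i" "\<And>j. dmin \<le> du $ j" "0 < dmin"
  proof -
    show "\<And>i. dmin \<le> dx $ i" "\<And>j. dmin \<le> du $ j" unfolding dmin_def by (rule Min_le; simp)+
    have "dmin \<in> insert 1 (range (\<lambda>i. dx $ i) \<union> range (\<lambda>j. du $ j))" unfolding dmin_def by (rule Min_in) auto
    thus "0 < dmin" using dx_pos du_pos by auto
  qed
  define g0 where "g0 = min (1/2) (min dmin (min (mx/2) (mu/2)))"
  have "0 < g0" using mx mu dmin by (simp add: g0_def)
  moreover have "good \<delta>" if "0 < \<delta>" "\<delta> \<le> g0" for \<delta>
    unfolding good_def using that mx mu dmin unfolding g0_def
    by (smt (verit, best) field_sum_of_halves)
  ultimately show ?thesis by blast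
qed

lemma Lb_large: "\<exists>\<delta>1>0. \<forall>\<delta>. 0 < \<delta> \<and> \<delta> \<le> \<delta>1 \<longrightarrow> C < Lb \<delta>"
proof -
  define \<delta>1 where "\<delta>1 = exp (- (\<bar>C\<bar> / \<epsilon> - cmin + 1))"
  have "C < Lb \<delta>" if d: "0 < \<delta>" "\<delta> \<le> \<delta>1" for \<delta>
  proof -
    have "ln \<delta> \<le> ln \<delta>1" using d by (subst ln_le_cancel_iff) (auto simp: \<delta>1_def)
    moreover have "ln \<delta>1 = - (\<bar>C\<bar> / \<epsilon> - cmin + 1)" by (simp add: \<delta>1_def)
    ultimately have "\<bar>C\<bar> / \<epsilon> + 1 \<le> - ln \<delta> + cmin" by linarith
    hence "\<epsilon> * (\<bar>C\<bar> / \<epsilon> + 1) \<le> \<epsilon> * (- ln \<delta> + cmin)" using eps_pos by (intro mult_left_mono) auto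
    hence "\<bar>C\<bar> + \<epsilon> \<le> Lb \<delta>" using eps_pos by (simp add: Lb_def distrib_left)
    thus ?thesis using eps_pos by linarith
  qed
  thus ?thesis by (intro exI[of _ \<delta>1]) (auto simp: \<delta>1_def)
qed

lemma small_x:
  assumes v: "0 < v"
  shows "\<exists>\<eta>>0. \<forall>x. norm x < \<eta> \<longrightarrow> \<phi> x < 1/2 \<and> qf P x - \<epsilon> * ln (1 - \<phi> x) < v"
proof -
  have pc: "isCont \<phi> 0" using phi_cont by (simp add: continuous_on_eq_continuous_at)
  have qc: "isCont (qf P) 0" using qf_continuous[of UNIV P] by (simp add: continuous_on_eq_continuous_at)
  have phl: "\<phi> \<midarrow>0\<rightarrow> 0" using pc phi_0 by (simp add: isCont_def)
  have hl: "(\<lambda>x. qf P x - \<epsilon> * ln (1 - \<phi> x)) \<midarrow>0\<rightarrow> qf P 0 - \<epsilon> * ln (1 - 0)"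
    using qc phl by (intro tendsto_intros) (auto simp: isCont_def)
  hence hl': "(\<lambda>x. qf P x - \<epsilon> * ln (1 - \<phi> x)) \<midarrow>0\<rightarrow> 0" by (simp add: qf_def)
  obtain s1 where s1: "s1 > 0" "\<And>x. x \<noteq> 0 \<and> norm (x - 0) < s1 \<Longrightarrow> norm (\<phi> x - 0) < 1/2"
    using LIM_D[OF phl, of "1/2"] by auto
  obtain s2 where s2: "s2 > 0" "\<And>x. x \<noteq> 0 \<and> norm (x - 0) < s2 \<Longrightarrow> norm ((qf P x - \<epsilon> * ln (1 - \<phi> x)) - 0) < v"
    using LIM_D[OF hl' v] by auto
  have "\<phi> x < 1/2 \<and> qf P x - \<epsilon> * ln (1 - \<phi> x) < v" if "norm x < min s1 s2" for x
  proof (cases "x = 0")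
    case True thus ?thesis using phi_0 v by (simp add: qf_def)
  next
    case False
    thus ?thesis using s1(2)[of x] s2(2)[of x] that by auto
  qed
  thus ?thesis using s1 s2 by (intro exI[of _ "min s1 s2"]) auto
qed

end



context mpc begin

theorem main_result:
  assumes Uc: "compact (polytope_set Cu du)"
    and dec: "\<exists>c0 \<rho>. 0 < \<rho> \<and> \<rho> < 1 \<and> (\<forall>k x. norm ((((*v) AK) ^^ k) x) \<le> c0 * \<rho>^k * norm x)"
  shows "\<forall>X0. compact X0 \<and> X0 \<subseteq> interior (feasible_set A B (polytope_set Cx dx) (polytope_set Cu du) {x. \<phi> x \<le> 1} N) \<longrightarrow>
    (\<exists>\<delta>0>0. \<forall>\<delta>. admissible r Cx dx rcx Cu du rcu \<delta> \<and> \<delta> \<le> \<delta>0 \<longrightarrow>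
      (let J = relaxed_cost A B Q R \<epsilon> N r \<delta> Cx dx rcx Cu du rcu P \<phi> in
        (\<forall>e>0. \<exists>\<eta>>0. \<forall>xs us. closed_loop A B J xs us \<and> norm (xs 0) < \<eta> \<longrightarrow>
                          (\<forall>k. norm (xs k) < e)) \<and>
        (\<forall>xs us. closed_loop A B J xs us \<and> xs 0 \<in> X0 \<longrightarrow>
           xs \<longlonglongrightarrow> 0 \<and>
           (\<forall>k. strictly_in Cx dx (xs k) \<and> strictly_in Cu du (us k 0)))))"
proof (intro allI impI)
  fix X0 assume X0: "compact X0 \<and> X0 \<subseteq> interior (feasible_set A B (polytope_set Cx dx) (polytope_set Cu du) {x. \<phi> x \<le> 1} N)"
  obtain c0 \<rho> where cr: "0 < \<rho>" "\<rho> < 1" "\<And>k x. norm ((((*v) AK) ^^ k) x) \<le> c0 * \<rho>^k * norm x"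
    using dec by blast
  obtain C m where Cm: "0 < m" "\<And>\<delta> x. good \<delta> \<Longrightarrow> \<delta> < m \<Longrightarrow> x \<in> X0 \<Longrightarrow> \<exists>u. J \<delta> x u \<le> C"
    using X0_bound[OF conjunct1[OF X0] conjunct2[OF X0] Uc] by blast
  obtain g0 where g0: "0 < g0" "\<And>\<delta>. 0 < \<delta> \<Longrightarrow> \<delta> \<le> g0 \<Longrightarrow> good \<delta>" using good_ex by blast
  obtain \<delta>1 where \<delta>1: "0 < \<delta>1" "\<And>\<delta>. 0 < \<delta> \<Longrightarrow> \<delta> \<le> \<delta>1 \<Longrightarrow> max C 1 < Lb \<delta>"
    using Lb_large[of "max C 1"] by blast
  obtain lR where lR: "0 < lR" "\<And>x. lR * norm x ^ 2 \<le> qf R x" using qf_pd_lb[OF R_pd] by blast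
  obtain lP where lP: "0 < lP" "\<And>x. lP * norm x ^ 2 \<le> qf P x" using qf_pd_lb[OF P_pd] by blast
  define l where "l = min lR lP"
  have l: "0 < l" "\<And>x. l * norm x ^ 2 \<le> qf R x" "\<And>x. l * norm x ^ 2 \<le> qf P x"
  proof -
    show "0 < l" using lR lP by (simp add: l_def)
    show "l * norm x ^ 2 \<le> qf R x" for x
      using lR(2)[of x] mult_right_mono[of l lR "norm x ^ 2"] by (simp add: l_def)
    show "l * norm x ^ 2 \<le> qf P x" for x
      using lP(2)[of x] mult_right_mono[of l lP "norm x ^ 2"] by (simp add: l_def)
  qed
  obtain c where c: "0 \<le> c" "\<And>x u k. k \<le> N \<Longrightarrow> norm (pred A B x u k) \<le> c * (norm x + (\<Sum>j<N. norm (u j)))"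
    using pred_bound[where A=A and B=B and N=N] by blast
  define \<delta>0 where "\<delta>0 = min g0 (min (m / 2) \<delta>1)"
  have \<delta>0: "0 < \<delta>0" using g0 Cm \<delta>1 by (simp add: \<delta>0_def)
  show "\<exists>\<delta>0>0. \<forall>\<delta>. admissible r Cx dx rcx Cu du rcu \<delta> \<and> \<delta> \<le> \<delta>0 \<longrightarrow>
      (let J = relaxed_cost A B Q R \<epsilon> N r \<delta> Cx dx rcx Cu du rcu P \<phi> in
        (\<forall>e>0. \<exists>\<eta>>0. \<forall>xs us. closed_loop A B J xs us \<and> norm (xs 0) < \<eta> \<longrightarrow>
                          (\<forall>k. norm (xs k) < e)) \<and>
        (\<forall>xs us. closed_loop A B J xs us \<and> xs 0 \<in> X0 \<longrightarrow>
           xs \<longlonglongrightarrow> 0 \<and>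
           (\<forall>k. strictly_in Cx dx (xs k) \<and> strictly_in Cu du (us k 0))))"
  proof (intro exI[of _ \<delta>0] conjI \<delta>0 allI impI)
    fix \<delta> assume ad: "admissible r Cx dx rcx Cu du rcu \<delta> \<and> \<delta> \<le> \<delta>0"
    have dpos: "0 < \<delta>" using ad by (simp add: admissible_def)
    have g: "good \<delta>" using g0(2)[OF dpos] ad by (simp add: \<delta>0_def)
    have dm: "\<delta> < m" using ad Cm(1) by (simp add: \<delta>0_def)
    have LbC: "max C 1 < Lb \<delta>" using \<delta>1(2)[OF dpos] ad by (simp add: \<delta>0_def)
    have part1: "\<forall>e>0. \<exists>\<eta>>0. \<forall>xs us. closed_loop A B (J \<delta>) xs us \<and> norm (xs 0) < \<eta> \<longrightarrow> (\<forall>k. norm (xs k) < e)"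
    proof (intro allI impI)
      fix e :: real assume e: "0 < e"
      define KK where "KK = 1 + 3 * c * real N"
      have KK: "1 \<le> KK" using c by (simp add: KK_def)
      define v where "v = min 1 (l * (e / (2 * KK))^2 / 2)"
      have v: "0 < v" "v \<le> 1" "v \<le> l * (e / (2 * KK))^2 / 2" using l e KK by (auto simp: v_def)
      obtain \<eta>1 where \<eta>1: "0 < \<eta>1" "\<And>x. norm x < \<eta>1 \<Longrightarrow> \<phi> x < 1/2 \<and> qf P x - \<epsilon> * ln (1 - \<phi> x) < v"
        using small_x[OF v(1)] by blast
      define \<eta> where "\<eta> = min \<eta>1 (e / (2 * (c + 1)))"
      have \<eta>: "0 < \<eta>" using \<eta>1 e c by (simp add: \<eta>_def)
      show "\<exists>\<eta>>0. \<forall>xs us. closed_loop A B (J \<delta>) xs us \<and> norm (xs 0) < \<eta> \<longrightarrow> (\<forall>k. norm (xs k) < e)"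
      proof (intro exI[of _ \<eta>] conjI \<eta> allI impI)
        fix xs us k assume a: "closed_loop A B (J \<delta>) xs us \<and> norm (xs 0) < \<eta>"
        hence cl: "closed_loop A B (J \<delta>) xs us" and n0: "norm (xs 0) < \<eta>" by auto
        have sx: "\<phi> (xs 0) < 1/2" "qf P (xs 0) - \<epsilon> * ln (1 - \<phi> (xs 0)) < v"
          using \<eta>1(2)[of "xs 0"] n0 by (auto simp: \<eta>_def)
        have dh: "\<delta> \<le> 1/2" using g by (simp add: good_def)
        have "J \<delta> (xs 0) (us 0) \<le> J \<delta> (xs 0) (\<lambda>j. K *v ((((*v) AK) ^^ j) (xs 0)))"
          by (rule cl_facts(1)[OF cl])
        also have "\<dots> \<le> Fh \<delta> (xs 0)" by (rule feedback_cost[OF g]) (use sx in simp)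
        also have "\<dots> = qf P (xs 0) - \<epsilon> * ln (1 - \<phi> (xs 0))"
          unfolding Fh_def using sx dh by (subst Bhat_gt) auto
        finally have V0: "J \<delta> (xs 0) (us 0) < v" using sx by linarith
        have lt: "J \<delta> (xs 0) (us 0) < Lb \<delta>" using V0 v LbC by linarith
        have sb: "norm (xs k) \<le> c * norm (xs 0) + KK * sqrt (J \<delta> (xs 0) (us 0) / l)"
          unfolding KK_def by (rule stab_bound[OF g cl lt l c])
        have t1: "c * norm (xs 0) < e / 2"
        proof -
          have "c * norm (xs 0) \<le> c * (e / (2 * (c + 1)))" using n0 c by (intro mult_left_mono) (auto simp: \<eta>_def)
          also have "\<dots> < e / 2" using c e by (simp add: field_simps)
          finally show ?thesis .
        qed
        have t2: "KK * sqrt (J \<delta> (xs 0) (us 0) / l) < e / 2"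
        proof -
          have X: "0 < l * (e / (2 * KK))^2" using e KK l by simp
          have "J \<delta> (xs 0) (us 0) < (e / (2 * KK))^2 * l" using V0 v(3) X by (simp add: mult.commute)
          hence "J \<delta> (xs 0) (us 0) / l < (e / (2 * KK))^2" using l(1) by (simp add: pos_divide_less_eq)
          hence "sqrt (J \<delta> (xs 0) (us 0) / l) < sqrt ((e / (2 * KK))^2)" by (rule real_sqrt_less_mono)
          also have "\<dots> = e / (2 * KK)" using e KK by simp
          finally have "KK * sqrt (J \<delta> (xs 0) (us 0) / l) < KK * (e / (2 * KK))"
            using KK by (intro mult_strict_left_mono) auto
          moreover have "KK * (e / (2 * KK)) = e / 2" using KK by simp
          ultimately show ?thesis by simp
        qed
        show "norm (xs k) < e" using sb t1 t2 by linarith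
      qed
    qed
    have part2: "\<forall>xs us. closed_loop A B (J \<delta>) xs us \<and> xs 0 \<in> X0 \<longrightarrow>
           xs \<longlonglongrightarrow> 0 \<and> (\<forall>k. strictly_in Cx dx (xs k) \<and> strictly_in Cu du (us k 0))"
    proof (intro allI impI)
      fix xs us assume a: "closed_loop A B (J \<delta>) xs us \<and> xs 0 \<in> X0"
      hence cl: "closed_loop A B (J \<delta>) xs us" and x0: "xs 0 \<in> X0" by auto
      obtain u where u: "J \<delta> (xs 0) u \<le> C" using Cm(2)[OF g dm x0] by blast
      have lt: "J \<delta> (xs 0) (us 0) < Lb \<delta>" using cl_facts(1)[OF cl, of 0 u] u LbC by linarith
      show "xs \<longlonglongrightarrow> 0 \<and> (\<forall>k. strictly_in Cx dx (xs k) \<and> strictly_in Cu du (us k 0))"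
        using converge[OF g cl lt l c cr(3) cr(1,2)] cl_strict[OF g cl lt] by blast
    qed
    show "let J = relaxed_cost A B Q R \<epsilon> N r \<delta> Cx dx rcx Cu du rcu P \<phi> in
        (\<forall>e>0. \<exists>\<eta>>0. \<forall>xs us. closed_loop A B J xs us \<and> norm (xs 0) < \<eta> \<longrightarrow>
                          (\<forall>k. norm (xs k) < e)) \<and>
        (\<forall>xs us. closed_loop A B J xs us \<and> xs 0 \<in> X0 \<longrightarrow>
           xs \<longlonglongrightarrow> 0 \<and>
           (\<forall>k. strictly_in Cx dx (xs k) \<and> strictly_in Cu du (us k 0)))"
      unfolding Let_def using part1 part2 by blast
  qed
qed

end


theorem corollary1:
  fixes A :: "real^'n^'n" and B :: "real^'m^'n"
    and Cx :: "real^'n^'p" and dx :: "real^'p"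
    and Cu :: "real^'m^'q" and du :: "real^'q"
    and Q :: "real^'n^'n" and R :: "real^'m^'m"
    and N :: nat and \<epsilon> :: real
    and r :: relax_kind and rcx :: "'p recenter" and rcu :: "'q recenter"
    and K :: "real^'n^'m" and M :: "real^'n^'n" and NN :: "(real^'n) set"
    and P :: "real^'n^'n"
    and \<phi> :: "real^'n \<Rightarrow> real" and Bf :: "real^'n \<Rightarrow> real"
  defines "X \<equiv> polytope_set Cx dx"
    and "U \<equiv> polytope_set Cu du"
    and "AK \<equiv> A + B ** K"
    and "Xf \<equiv> {x. \<phi> x \<le> 1}"
  assumes stab: "stabilizable A B"
    and U_compact: "compact U"
    and dx_pos: "\<forall>i. 0 < dx $ i" and du_pos: "\<forall>j. 0 < du $ j"
    and Q_psd: "psd Q" and R_pd: "pd R"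
    and N_pos: "1 \<le> N" and eps_pos: "0 < \<epsilon>"
    and r_valid: "valid_relax r"
    and rcx_valid: "valid_recenter Cx dx rcx" and rcu_valid: "valid_recenter Cu du rcu"
    and K_schur: "schur AK"
    and M_psd: "psd M"
    and NN_convex: "convex NN" and NN_compact: "compact NN"
    and NN_sub: "NN \<subseteq> {x \<in> X. K *v x \<in> U}"
    and NN_int: "0 \<in> interior NN"
    and NN_bound: "\<forall>x\<in>NN. strictly_in Cx dx x \<and> strictly_in Cu du (K *v x) \<and>
                      log_barrier Cx dx rcx x + log_barrier Cu du rcu (K *v x) \<le> qf M x"
    and P_pd: "pd P"
    and P_lyap: "P = transpose AK ** P ** AK + transpose K ** R ** K + Q + \<epsilon> *\<^sub>R M"
    and phi_C1: "\<exists>g. (\<forall>x. (\<phi> has_derivative (\<lambda>h. g x \<bullet> h)) (at x)) \<and> continuous_on UNIV g"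
    and phi_convex: "convex_on UNIV \<phi>"
    and phi_posdef: "\<phi> 0 = 0" "\<forall>x. x \<noteq> 0 \<longrightarrow> 0 < \<phi> x"
    and phi_dec: "\<forall>x\<in>Xf. \<phi> (AK *v x) \<le> \<phi> x"
    and Xf_convex: "convex Xf" and Xf_compact: "compact Xf"
    and Xf_sub: "0 \<in> Xf" "Xf \<subseteq> NN"
    and Xf_inv: "\<forall>x\<in>Xf. AK *v x \<in> Xf"
    and Bf_convex: "convex_on (interior Xf) Bf"
    and Bf_nonneg: "\<forall>x\<in>interior Xf. 0 \<le> Bf x"
    and Bf_zero: "Bf 0 = 0"
    and Bf_boundary: "\<forall>y\<in>frontier Xf. filterlim Bf at_top (at y within interior Xf)"
    and Bf_dec: "\<forall>x\<in>interior Xf. Bf (AK *v x) \<le> Bf x"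
  shows "\<forall>X0. compact X0 \<and> X0 \<subseteq> interior (feasible_set A B X U Xf N) \<longrightarrow>
    (\<exists>\<delta>0>0. \<forall>\<delta>. admissible r Cx dx rcx Cu du rcu \<delta> \<and> \<delta> \<le> \<delta>0 \<longrightarrow>
      (let J = relaxed_cost A B Q R \<epsilon> N r \<delta> Cx dx rcx Cu du rcu P \<phi> in
        (\<forall>e>0. \<exists>\<eta>>0. \<forall>xs us. closed_loop A B J xs us \<and> norm (xs 0) < \<eta> \<longrightarrow>
                          (\<forall>k. norm (xs k) < e)) \<and>
        (\<forall>xs us. closed_loop A B J xs us \<and> xs 0 \<in> X0 \<longrightarrow>
           xs \<longlonglongrightarrow> 0 \<and>
           (\<forall>k. strictly_in Cx dx (xs k) \<and> strictly_in Cu du (us k 0)))))"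
  proof -
  have phi_cont: "continuous_on UNIV \<phi>"
  proof -
    obtain g where g: "\<And>x. (\<phi> has_derivative (\<lambda>h. g x \<bullet> h)) (at x)" using phi_C1 by blast
    have "isCont \<phi> x" for x using has_derivative_continuous[OF g[of x]] .
    thus ?thesis by (simp add: continuous_at_imp_continuous_on)
  qed
  interpret mpc A B Cx dx Cu du Q R N \<epsilon> r rcx rcu K M NN P \<phi>
  proof
    show "\<forall>x. \<phi> x \<le> 1 \<longrightarrow> \<phi> ((A + B ** K) *v x) \<le> \<phi> x" using phi_dec unfolding Xf_def AK_def by auto
    show "{x. \<phi> x \<le> 1} \<subseteq> NN" using Xf_sub unfolding Xf_def by auto
    show "P = transpose (A + B ** K) ** P ** (A + B ** K) + transpose K ** R ** K + Q + \<epsilon> *\<^sub>R M"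
      using P_lyap unfolding AK_def .
  qed (use dx_pos du_pos Q_psd R_pd N_pos eps_pos r_valid rcx_valid rcu_valid NN_compact NN_bound
        P_pd phi_cont phi_convex phi_posdef in auto)
  have dec: "\<exists>c0 \<rho>. 0 < \<rho> \<and> \<rho> < 1 \<and> (\<forall>k x. norm ((((*v) (A + B ** K)) ^^ k) x) \<le> c0 * \<rho>^k * norm x)"
    using schur_decay[OF K_schur[unfolded AK_def]] by blast
  show ?thesis using main_result[OF U_compact[unfolded U_def] dec] unfolding X_def U_def Xf_def .
qed

end
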